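(* Fix $y_0\in Y$ and suppose an optimal solution $(\bar\psi,\bar\eta)$ of the dual problem exists. Let $(y(\cdot),u(\cdot))$ be an admissible process on $\{0,1,\dots\}$ with $y(0)=y_0$ which is periodic, i.e. there is an integer $T_0>0$ with $(y(t+T_0),u(t+T_0))=(y(t),u(t))$ for all $t\ge0$. Suppose $u(\cdot)$ is optimal in the long-run average problem, i.e. $$\liminf_{T\to\infty}\frac1T\sum_{t=0}^{T-1}k(y(t),u(t))=\inf_{u'\in\mathcal U(y_0)}\liminf_{T\to\infty}\frac1T\sum_{t=0}^{T-1}k(y'(t),u'(t)),$$ where $y'$ is the trajectory generated by $u'$. Then for all $t=0,1,\dots$: $$k(y(t),u(t))-\bar\psi(y(t))+\bar\eta(f(y(t),u(t)))-\bar\eta(y(t))=V(y_0)-\bar\psi(y_0)\quad\text{and}\quad\bar\psi(y(t))=\bar\psi(y_0).$$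
   Context: Let $Y\subset\mathbb{R}^m$ be nonempty compact, $U_0$ a compact metric space, $U(\cdot):Y\rightsquigarrow U_0$ upper semicontinuous and compact-valued, and $f:\mathbb{R}^m\times U_0\to\mathbb{R}^m$, $k:\mathbb{R}^m\times U_0\to\mathbb{R}$ continuous. Put $A(y):=\{u\in U(y): f(y,u)\in Y\}$ and $G:=\{(y,u):y\in Y,\ u\in A(y)\}$. Standing assumption: $A(y)\ne\emptyset$ for all $y\in Y$. An admissible process from $y_0$ on $\{0,\dots,T-1\}$ (respectively on $\{0,1,\dots\}$) is a pair $(y(t),u(t))$ with $y(0)=y_0$, $u(t)\in A(y(t))$ and $y(t+1)=f(y(t),u(t))$. The controls form $\mathcal U_T(y_0)$ (respectively $\mathcal U(y_0)$). Define $V_T(y_0):=\frac1T\min_{u\in\mathcal U_T(y_0)}\sum_{t=0}^{T-1}k(y(t),u(t))$. Standing assumption of this result: for every $y\in Y$ the limit $V(y):=\lim_{T\to\infty}V_T(y)$ exists, and $V$ is continuous on $Y$. Dual problem: $d^*(y_0):=\sup\mu$, where the supremum is over triples $(\mu,\psi,\eta)\in\mathbb{R}\times C(Y)\times C(Y)$ with, for all $(y,u)\in G$: $$k(y,u)+\psi(y_0)-\psi(y)+\eta(f(y,u))-\eta(y)-\mu\ge0,\qquad\psi(f(y,u))-\psi(y)\ge0.$$ An optimal solution of the dual problem is a pair $(\bar\psi,\bar\eta)\in C(Y)\times C(Y)$ with, for all $(y,u)\in G$: $$k(y,u)+\bar\psi(y_0)-\bar\psi(y)+\bar\eta(f(y,u))-\bar\eta(y)\ge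 d^*(y_0),\qquad\bar\psi(f(y,u))-\bar\psi(y)\ge0.$$ *)

theory Defs
  imports "HOL-Analysis.Analysis"
begin

definition usc_on :: "'a::metric_space set \<Rightarrow> ('a \<Rightarrow> 'b::topological_space set) \<Rightarrow> bool" where
  "usc_on Y U \<longleftrightarrow> (\<forall>y\<in>Y. \<forall>W. open W \<and> U y \<subseteq> W \<longrightarrow>
      (\<exists>e>0. \<forall>y'\<in>Y. dist y' y < e \<longrightarrow> U y' \<subseteq> W))"

definition Aset :: "'a set \<Rightarrow> ('a \<Rightarrow> 'b set) \<Rightarrow> ('a \<Rightarrow> 'b \<Rightarrow> 'a) \<Rightarrow> 'a \<Rightarrow> 'b set" where
  "Aset Y U f y = {u \<in> U y. f y u \<in> Y}"

definition Gset :: "'a set \<Rightarrow> ('a \<Rightarrow> 'b set) \<Rightarrow> ('a \<Rightarrow> 'b \<Rightarrow> 'a) \<Rightarrow> ('a \<times> 'b) set" where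
  "Gset Y U f = {(y, u). y \<in> Y \<and> u \<in> Aset Y U f y}"

fun traj :: "('a \<Rightarrow> 'b \<Rightarrow> 'a) \<Rightarrow> 'a \<Rightarrow> (nat \<Rightarrow> 'b) \<Rightarrow> nat \<Rightarrow> 'a" where
  "traj f y0 u 0 = y0"
| "traj f y0 u (Suc t) = f (traj f y0 u t) (u t)"

definition UT :: "'a set \<Rightarrow> ('a \<Rightarrow> 'b set) \<Rightarrow> ('a \<Rightarrow> 'b \<Rightarrow> 'a) \<Rightarrow> 'a \<Rightarrow> nat \<Rightarrow> (nat \<Rightarrow> 'b) set" where
  "UT Y U f y0 T = {u. \<forall>t<T. u t \<in> Aset Y U f (traj f y0 u t)}"

definition Uinf :: "'a set \<Rightarrow> ('a \<Rightarrow> 'b set) \<Rightarrow> ('a \<Rightarrow> 'b \<Rightarrow> 'a) \<Rightarrow> 'a \<Rightarrow> (nat \<Rightarrow> 'b) set" where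
  "Uinf Y U f y0 = {u. \<forall>t. u t \<in> Aset Y U f (traj f y0 u t)}"

definition VT :: "'a set \<Rightarrow> ('a \<Rightarrow> 'b set) \<Rightarrow> ('a \<Rightarrow> 'b \<Rightarrow> 'a) \<Rightarrow> ('a \<Rightarrow> 'b \<Rightarrow> real) \<Rightarrow> 'a \<Rightarrow> nat \<Rightarrow> real" where
  "VT Y U f k y0 T = (1 / real T) *
     Inf ((\<lambda>u. \<Sum>t<T. k (traj f y0 u t) (u t)) ` UT Y U f y0 T)"

definition dstar :: "'a::topological_space set \<Rightarrow> ('a \<Rightarrow> 'b set) \<Rightarrow> ('a \<Rightarrow> 'b \<Rightarrow> 'a) \<Rightarrow> ('a \<Rightarrow> 'b \<Rightarrow> real) \<Rightarrow> 'a \<Rightarrow> ereal" where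
  "dstar Y U f k y0 = (SUP \<mu> \<in> {\<mu>. \<exists>\<psi> \<eta>. continuous_on Y \<psi> \<and> continuous_on Y \<eta> \<and>
      (\<forall>(y, u) \<in> Gset Y U f.
          k y u + \<psi> y0 - \<psi> y + \<eta> (f y u) - \<eta> y - \<mu> \<ge> 0 \<and> \<psi> (f y u) - \<psi> y \<ge> 0)}. ereal \<mu>)"

definition dual_optimal :: "'a::topological_space set \<Rightarrow> ('a \<Rightarrow> 'b set) \<Rightarrow> ('a \<Rightarrow> 'b \<Rightarrow> 'a) \<Rightarrow> ('a \<Rightarrow> 'b \<Rightarrow> real) \<Rightarrow> 'a
     \<Rightarrow> ('a \<Rightarrow> real) \<Rightarrow> ('a \<Rightarrow> real) \<Rightarrow> bool" where
  "dual_optimal Y U f k y0 \<psi> \<eta> \<longleftrightarrow> continuous_on Y \<psi> \<and> continuous_on Y \<eta> \<and>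
     (\<forall>(y, u) \<in> Gset Y U f.
        ereal (k y u + \<psi> y0 - \<psi> y + \<eta> (f y u) - \<eta> y) \<ge> dstar Y U f k y0 \<and> \<psi> (f y u) - \<psi> y \<ge> 0)"

definition avg_cost :: "('a \<Rightarrow> 'b \<Rightarrow> 'a) \<Rightarrow> ('a \<Rightarrow> 'b \<Rightarrow> real) \<Rightarrow> 'a \<Rightarrow> (nat \<Rightarrow> 'b) \<Rightarrow> ereal" where
  "avg_cost f k y0 u = liminf (\<lambda>T. ereal ((1 / real T) * (\<Sum>t<T. k (traj f y0 u t) (u t))))"

end

theory Submission imports Defs begin

lemma sum_split_add: "(\<Sum>t<a+b. (g::nat\<Rightarrow>real) t) = (\<Sum>t<a. g t) + (\<Sum>s<b. g (a+s))"
  by (induction b) (auto simp: add.assoc)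

lemma traj_shift: "traj f y v (s + T) = traj f (traj f y v T) (\<lambda>s. v (s + T)) s"
  by (induction s) auto

lemma traj_cons: "traj f y (\<lambda>t. if t = 0 then u else v (t - 1)) (Suc t) = traj f (f y u) v t"
proof (induction t)
  case 0 then show ?case by simp
next
  case (Suc t) then show ?case by simp
qed

locale sys =
  fixes Y :: "'a::euclidean_space set" and U0 :: "'b::metric_space set"
    and U :: "'a \<Rightarrow> 'b set" and f :: "'a \<Rightarrow> 'b \<Rightarrow> 'a" and k :: "'a \<Rightarrow> 'b \<Rightarrow> real"
    and V :: "'a \<Rightarrow> real"
  assumes Ycpt: "compact Y" and Yne: "Y \<noteq> {}"
    and U0cpt: "compact U0"
    and U_sub: "\<forall>x\<in>Y. U x \<subseteq> U0"
    and U_cpt: "\<forall>x\<in>Y. compact (U x)"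
    and U_usc: "usc_on Y U"
    and f_cont: "continuous_on (UNIV \<times> U0) (\<lambda>(x, v). f x v)"
    and k_cont: "continuous_on (UNIV \<times> U0) (\<lambda>(x, v). k x v)"
    and A_ne: "\<forall>x\<in>Y. Aset Y U f x \<noteq> {}"
    and V_lim: "\<forall>x\<in>Y. (\<lambda>T. VT Y U f k x T) \<longlonglongrightarrow> V x"
    and V_cont: "continuous_on Y V"
begin

abbreviation "A \<equiv> Aset Y U f"

lemma A_iff: "u \<in> A y \<longleftrightarrow> u \<in> U y \<and> f y u \<in> Y"
  by (simp add: Aset_def)

lemma A_U0: "y \<in> Y \<Longrightarrow> u \<in> A y \<Longrightarrow> u \<in> U0"
  using U_sub by (auto simp: A_iff)

lemma Yclosed: "closed Y" using Ycpt compact_imp_closed by blast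
lemma U0closed: "closed U0" using U0cpt compact_imp_closed by blast

lemma k_bound: "\<exists>C\<ge>0. \<forall>y\<in>Y. \<forall>u\<in>U0. \<bar>k y u\<bar> \<le> C"
proof -
  have "compact ((\<lambda>(x, v). k x v) ` (Y \<times> U0))"
    by (rule compact_continuous_image[OF continuous_on_subset[OF k_cont]])
       (auto intro: compact_Times Ycpt U0cpt)
  from compact_imp_bounded[OF this] obtain C where C: "\<forall>x\<in>(\<lambda>(x, v). k x v) ` (Y \<times> U0). norm x \<le> C"
    unfolding bounded_iff by blast
  have "\<bar>k y u\<bar> \<le> max C 0" if "y \<in> Y" "u \<in> U0" for y u
  proof -
    have "k y u \<in> (\<lambda>(x, v). k x v) ` (Y \<times> U0)" using that by force
    then have "norm (k y u) \<le> C" using C by blast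
    then show ?thesis by simp
  qed
  then show ?thesis by (intro exI[of _ "max C 0"]) simp
qed

lemma V_bound: "\<exists>B\<ge>0. \<forall>y\<in>Y. \<bar>V y\<bar> \<le> B"
proof -
  have "compact (V ` Y)" by (rule compact_continuous_image[OF V_cont Ycpt])
  from compact_imp_bounded[OF this] obtain B where B: "\<forall>x\<in>V ` Y. norm x \<le> B"
    unfolding bounded_iff by blast
  have "\<bar>V y\<bar> \<le> max B 0" if "y \<in> Y" for y using B that by fastforce
  then show ?thesis by (intro exI[of _ "max B 0"]) simp
qed

lemma tend_f:
  assumes "z \<longlonglongrightarrow> a" "v \<longlonglongrightarrow> b" "\<forall>j. v j \<in> U0" "b \<in> U0"
  shows "(\<lambda>j. f (z j) (v j)) \<longlonglongrightarrow> f a b"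
proof -
  have "((\<lambda>j. (\<lambda>(x, v). f x v) (z j, v j)) \<longlongrightarrow> (\<lambda>(x, v). f x v) (a, b)) sequentially"
    by (rule continuous_on_tendsto_compose[OF f_cont]) (use assms in \<open>auto intro: tendsto_Pair\<close>)
  then show ?thesis by simp
qed

lemma tend_k:
  assumes "z \<longlonglongrightarrow> a" "v \<longlonglongrightarrow> b" "\<forall>j. v j \<in> U0" "b \<in> U0"
  shows "(\<lambda>j. k (z j) (v j)) \<longlonglongrightarrow> k a b"
proof -
  have "((\<lambda>j. (\<lambda>(x, v). k x v) (z j, v j)) \<longlongrightarrow> (\<lambda>(x, v). k x v) (a, b)) sequentially"
    by (rule continuous_on_tendsto_compose[OF k_cont]) (use assms in \<open>auto intro: tendsto_Pair\<close>)
  then show ?thesis by simp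
qed

lemma G_closed:
  assumes z: "z \<longlonglongrightarrow> a" and v: "v \<longlonglongrightarrow> b" and zY: "\<forall>j. z j \<in> Y" and vA: "\<forall>j. v j \<in> A (z j)"
  shows "a \<in> Y \<and> b \<in> A a"
proof -
  have aY: "a \<in> Y" using closed_sequentially[OF Yclosed _ z] zY by simp
  have vU0: "\<forall>j. v j \<in> U0" using vA zY A_U0 by blast
  have bU0: "b \<in> U0" using closed_sequentially[OF U0closed _ v] vU0 by simp
  have bU: "b \<in> U a"
  proof (rule ccontr)
    assume nb: "b \<notin> U a"
    have "compact (U a)" using U_cpt aY by simp
    then have "closed (U a)" by (rule compact_imp_closed)
    then have "open (- U a)" by (simp add: open_Compl)
    then obtain e where e: "e > 0" "ball b e \<subseteq> - U a" using open_contains_ball_eq[of "- U a" b] nb by auto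
    define W where "W = - cball b (e/2)"
    have oW: "open W" unfolding W_def by (simp add: open_Compl)
    have UW: "U a \<subseteq> W"
    proof
      fix x assume "x \<in> U a"
      then have "x \<notin> ball b e" using e(2) by auto
      then show "x \<in> W" using e(1) unfolding W_def by simp
    qed
    have "\<forall>y\<in>Y. \<forall>W. open W \<and> U y \<subseteq> W \<longrightarrow> (\<exists>e>0. \<forall>y'\<in>Y. dist y' y < e \<longrightarrow> U y' \<subseteq> W)"
      using U_usc unfolding usc_on_def .
    then have "\<exists>e>0. \<forall>y'\<in>Y. dist y' a < e \<longrightarrow> U y' \<subseteq> W" using aY oW UW by simp
    then obtain e' where e': "e' > 0" "\<forall>y'\<in>Y. dist y' a < e' \<longrightarrow> U y' \<subseteq> W"
      by blast
    have ev1: "eventually (\<lambda>j. dist (z j) a < e') sequentially" by (rule tendstoD[OF z e'(1)])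
    have ev2: "eventually (\<lambda>j. dist (v j) b < e/2) sequentially" by (rule tendstoD[OF v]) (use e(1) in simp)
    have "eventually (\<lambda>j. dist (z j) a < e' \<and> dist (v j) b < e/2) sequentially"
      using ev1 ev2 by (rule eventually_conj)
    then obtain M where M: "\<forall>j\<ge>M. dist (z j) a < e' \<and> dist (v j) b < e/2"
      unfolding eventually_sequentially by auto
    define j where "j = M"
    have j: "dist (z j) a < e'" "dist (v j) b < e/2" using M j_def by auto
    have "z j \<in> Y" using zY by simp
    then have "U (z j) \<subseteq> W" using e'(2) j(1) by blast
    moreover have "v j \<in> U (z j)" using vA unfolding Aset_def by blast
    ultimately have "v j \<in> W" by (rule subsetD)
    then have "dist b (v j) > e/2" unfolding W_def by simp
    then show False using j(2) dist_commute[of b "v j"] by linarith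
  qed
  have ft: "(\<lambda>j. f (z j) (v j)) \<longlonglongrightarrow> f a b" by (rule tend_f[OF z v vU0 bU0])
  have fY: "\<forall>j. f (z j) (v j) \<in> Y" using vA unfolding Aset_def by blast
  have fab: "f a b \<in> Y" using closed_sequentially[OF Yclosed _ ft] fY by simp
  show ?thesis unfolding Aset_def using aY bU fab by blast
qed

lemma traj_Y:
  assumes "y \<in> Y" "v \<in> UT Y U f y N" "t \<le> N"
  shows "traj f y v t \<in> Y"
  using assms(3)
proof (induction t)
  case 0 then show ?case using assms by simp
next
  case (Suc t)
  then have "v t \<in> A (traj f y v t)" using assms(2) by (auto simp: UT_def)
  then show ?case by (auto simp: A_iff)
qed

lemma UT_mono: "v \<in> UT Y U f y N \<Longrightarrow> M \<le> N \<Longrightarrow> v \<in> UT Y U f y M"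
  by (auto simp: UT_def)

lemma UT_shift:
  assumes "v \<in> UT Y U f y N" "T \<le> N"
  shows "(\<lambda>s. v (s + T)) \<in> UT Y U f (traj f y v T) (N - T)"
proof -
  have "v (t+T) \<in> A (traj f (traj f y v T) (\<lambda>s. v (s+T)) t)" if "t < N - T" for t
  proof -
    have "t + T < N" using that by simp
    then have "v (t+T) \<in> A (traj f y v (t+T))" using assms(1) by (simp add: UT_def)
    then show ?thesis by (simp only: traj_shift)
  qed
  then show ?thesis unfolding UT_def by simp
qed

lemma Uinf_ex:
  assumes "y \<in> Y" shows "\<exists>v. v \<in> Uinf Y U f y"
proof -
  define s where "s = rec_nat y (\<lambda>_ x. f x (SOME u. u \<in> A x))"
  have s0: "s 0 = y" and sS: "\<And>t. s (Suc t) = f (s t) (SOME u. u \<in> A (s t))" by (simp_all add: s_def)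
  have sY: "s t \<in> Y \<and> (SOME u. u \<in> A (s t)) \<in> A (s t)" for t
  proof (induction t)
    case 0 then show ?case using assms A_ne s0 by (simp add: some_in_eq)
  next
    case (Suc t)
    then have "s (Suc t) \<in> Y" using sS by (auto simp: A_iff)
    then show ?case using A_ne by (simp add: some_in_eq)
  qed
  define v where "v t = (SOME u. u \<in> A (s t))" for t
  have tr: "traj f y v t = s t" for t by (induction t) (auto simp: s0 sS v_def)
  have "v t \<in> A (traj f y v t)" for t
  proof -
    have "v t \<in> A (s t)" unfolding v_def using sY by blast
    then show ?thesis by (simp only: tr)
  qed
  then have "v \<in> Uinf Y U f y" unfolding Uinf_def by blast
  then show ?thesis by blast
qed

lemma UT_ex: assumes "y \<in> Y" shows "\<exists>v. v \<in> UT Y U f y N"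
proof -
  obtain v where "v \<in> Uinf Y U f y" using Uinf_ex assms by blast
  then show ?thesis by (intro exI[of _ v]) (auto simp: Uinf_def UT_def)
qed


definition Ck where "Ck = (SOME C. C \<ge> 0 \<and> (\<forall>y\<in>Y. \<forall>u\<in>U0. \<bar>k y u\<bar> \<le> C))"
lemma Ck: "Ck \<ge> 0" "\<And>y u. y \<in> Y \<Longrightarrow> u \<in> U0 \<Longrightarrow> \<bar>k y u\<bar> \<le> Ck"
proof -
  have "Ck \<ge> 0 \<and> (\<forall>y\<in>Y. \<forall>u\<in>U0. \<bar>k y u\<bar> \<le> Ck)"
    unfolding Ck_def using k_bound by (rule someI_ex)
  then show "Ck \<ge> 0" "\<And>y u. y \<in> Y \<Longrightarrow> u \<in> U0 \<Longrightarrow> \<bar>k y u\<bar> \<le> Ck" by auto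
qed

definition BV where "BV = (SOME B. B \<ge> 0 \<and> (\<forall>y\<in>Y. \<bar>V y\<bar> \<le> B))"
lemma BV: "BV \<ge> 0" "\<And>y. y \<in> Y \<Longrightarrow> \<bar>V y\<bar> \<le> BV"
proof -
  have "BV \<ge> 0 \<and> (\<forall>y\<in>Y. \<bar>V y\<bar> \<le> BV)"
    unfolding BV_def using V_bound by (rule someI_ex)
  then show "BV \<ge> 0" "\<And>y. y \<in> Y \<Longrightarrow> \<bar>V y\<bar> \<le> BV" by auto
qed

definition cst :: "nat \<Rightarrow> (nat \<Rightarrow> 'a) \<Rightarrow> (nat \<Rightarrow> 'b) \<Rightarrow> real" where
  "cst N z v = (\<Sum>t<N. k (z t) (v t))"

definition pseudo :: "real \<Rightarrow> nat \<Rightarrow> 'a \<Rightarrow> (nat \<Rightarrow> 'a) \<Rightarrow> (nat \<Rightarrow> 'b) \<Rightarrow> bool" where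
  "pseudo r N y z v \<longleftrightarrow> (0 < N \<longrightarrow> dist y (z 0) \<le> r) \<and> (\<forall>t<N. z t \<in> Y \<and> v t \<in> A (z t))
     \<and> (\<forall>t. Suc t < N \<longrightarrow> dist (f (z t) (v t)) (z (Suc t)) \<le> r)"

lemma cst_lb:
  assumes "\<forall>t<N. z t \<in> Y \<and> v t \<in> A (z t)"
  shows "cst N z v \<ge> - (real N * Ck)"
proof -
  have "k (z t) (v t) \<ge> - Ck" if "t < N" for t
  proof -
    have "z t \<in> Y" "v t \<in> U0" using assms that A_U0 by auto
    then show ?thesis using Ck(2) by force
  qed
  then have "(\<Sum>t<N. - Ck) \<le> cst N z v" unfolding cst_def by (intro sum_mono) auto
  then show ?thesis by simp
qed

lemma cst_ub:
  assumes "\<forall>t<N. z t \<in> Y \<and> v t \<in> A (z t)"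
  shows "cst N z v \<le> real N * Ck"
proof -
  have "k (z t) (v t) \<le> Ck" if "t < N" for t
  proof -
    have "z t \<in> Y" "v t \<in> U0" using assms that A_U0 by auto
    then show ?thesis using Ck(2) by force
  qed
  then have "cst N z v \<le> (\<Sum>t<N. Ck)" unfolding cst_def by (intro sum_mono) auto
  then show ?thesis by simp
qed

lemma traj_adm:
  assumes "y \<in> Y" "v \<in> UT Y U f y N"
  shows "\<forall>t<N. traj f y v t \<in> Y \<and> v t \<in> A (traj f y v t)"
  using traj_Y[OF assms] assms(2) by (auto simp: UT_def)

lemma true_pseudo:
  assumes "y \<in> Y" "v \<in> UT Y U f y N"
  shows "pseudo 0 N y (traj f y v) v"
  using traj_adm[OF assms] unfolding pseudo_def by simp

lemma pseudo0_traj: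
  assumes p: "pseudo 0 N y z v" and N: "0 < N"
  shows "\<forall>t<N. traj f y v t = z t" "v \<in> UT Y U f y N" "cst N (traj f y v) v = cst N z v" "y \<in> Y"
proof -
  show tr: "\<forall>t<N. traj f y v t = z t"
  proof (intro allI impI)
    fix t assume "t < N"
    then show "traj f y v t = z t"
    proof (induction t)
      case 0 then show ?case using p N unfolding pseudo_def by simp
    next
      case (Suc t)
      then have "traj f y v t = z t" by simp
      moreover have "dist (f (z t) (v t)) (z (Suc t)) \<le> 0" using p Suc.prems unfolding pseudo_def by blast
      ultimately show ?case by simp
    qed
  qed
  show "v \<in> UT Y U f y N" using p tr unfolding pseudo_def UT_def by simp
  show "cst N (traj f y v) v = cst N z v" unfolding cst_def using tr by (intro sum.cong) auto
  have "y = z 0" using p N unfolding pseudo_def by simp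
  then show "y \<in> Y" using p N unfolding pseudo_def by simp
qed

lemma VT_le:
  assumes "y \<in> Y" "v \<in> UT Y U f y T"
  shows "real T * VT Y U f k y T \<le> cst T (traj f y v) v"
proof (cases "T = 0")
  case True then show ?thesis by (simp add: cst_def)
next
  case False
  let ?S = "(\<lambda>u. \<Sum>t<T. k (traj f y u t) (u t)) ` UT Y U f y T"
  have "bdd_below ?S"
  proof (rule bdd_belowI)
    fix x assume "x \<in> ?S"
    then obtain u where u: "u \<in> UT Y U f y T" "x = cst T (traj f y u) u" by (auto simp: cst_def)
    show "- (real T * Ck) \<le> x" using cst_lb[OF traj_adm[OF assms(1) u(1)]] u(2) by simp
  qed
  then have "Inf ?S \<le> cst T (traj f y v) v" using assms(2) unfolding cst_def by (intro cInf_lower) auto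
  then show ?thesis using False by (simp add: VT_def)
qed

lemma VT_approx:
  assumes "y \<in> Y" "e > 0"
  shows "\<exists>v\<in>UT Y U f y T. cst T (traj f y v) v < real T * VT Y U f k y T + e"
proof (cases "T = 0")
  case True
  obtain v where "v \<in> UT Y U f y T" using UT_ex assms by blast
  then show ?thesis using True assms by (intro bexI[of _ v]) (auto simp: cst_def)
next
  case False
  let ?S = "(\<lambda>u. \<Sum>t<T. k (traj f y u t) (u t)) ` UT Y U f y T"
  have ne: "?S \<noteq> {}" using UT_ex assms by blast
  have "real T * VT Y U f k y T = Inf ?S" using False by (simp add: VT_def)
  then have "Inf ?S < real T * VT Y U f k y T + e" using assms by simp
  from cInf_lessD[OF ne this] show ?thesis by (auto simp: cst_def)
qed

lemma V_mono:
  assumes y: "y \<in> Y" and u: "u \<in> A y"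
  shows "V y \<le> V (f y u)"
proof -
  have fY: "f y u \<in> Y" using u by (simp add: A_iff)
  have ineq: "real (Suc T) * VT Y U f k y (Suc T) \<le> k y u + real T * VT Y U f k (f y u) T" for T
  proof (rule field_le_epsilon)
    fix e :: real assume e: "e > 0"
    obtain v where v: "v \<in> UT Y U f (f y u) T" "cst T (traj f (f y u) v) v < real T * VT Y U f k (f y u) T + e"
      using VT_approx[OF fY e] by blast
    define v' where "v' = (\<lambda>t. if t = 0 then u else v (t - 1))"
    have trj: "traj f y v' (Suc t) = traj f (f y u) v t" for t unfolding v'_def by (rule traj_cons)
    have "v' \<in> UT Y U f y (Suc T)"
      unfolding UT_def
    proof (intro CollectI allI impI)
      fix t assume t: "t < Suc T"
      show "v' t \<in> A (traj f y v' t)"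
      proof (cases t)
        case 0 then show ?thesis using u by (simp add: v'_def)
      next
        case (Suc s)
        then have "v s \<in> A (traj f (f y u) v s)" using v(1) t by (simp add: UT_def)
        then show ?thesis using Suc trj by (simp add: v'_def)
      qed
    qed
    then have "real (Suc T) * VT Y U f k y (Suc T) \<le> cst (Suc T) (traj f y v') v'" by (rule VT_le[OF y])
    also have "cst (Suc T) (traj f y v') v' = k y u + cst T (traj f (f y u) v) v"
      unfolding cst_def sum.lessThan_Suc_shift using trj by (simp add: v'_def)
    finally show "real (Suc T) * VT Y U f k y (Suc T) \<le> k y u + real T * VT Y U f k (f y u) T + e"
      using v(2) by simp
  qed
  have l1: "(\<lambda>T. VT Y U f k y (Suc T)) \<longlonglongrightarrow> V y"
    using V_lim y LIMSEQ_Suc by blast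
  have l2: "(\<lambda>T. k y u * inverse (real (Suc T)) + (real T / real (Suc T)) * VT Y U f k (f y u) T)
      \<longlonglongrightarrow> k y u * 0 + 1 * V (f y u)"
    by (intro tendsto_intros LIMSEQ_inverse_real_of_nat LIMSEQ_n_over_Suc_n) (use V_lim fY in blast)
  have "VT Y U f k y (Suc T) \<le> k y u * inverse (real (Suc T)) + (real T / real (Suc T)) * VT Y U f k (f y u) T" for T
  proof -
    have "VT Y U f k y (Suc T) = (real (Suc T) * VT Y U f k y (Suc T)) / real (Suc T)" by simp
    also have "\<dots> \<le> (k y u + real T * VT Y U f k (f y u) T) / real (Suc T)"
      by (rule divide_right_mono[OF ineq]) simp
    also have "\<dots> = k y u * inverse (real (Suc T)) + (real T / real (Suc T)) * VT Y U f k (f y u) T"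
      by (simp add: divide_inverse algebra_simps)
    finally show ?thesis .
  qed
  then show ?thesis using LIMSEQ_le[OF l1 l2] by simp
qed

lemma V_mono_traj:
  assumes "y \<in> Y" "v \<in> UT Y U f y N" "t \<le> N"
  shows "V y \<le> V (traj f y v t)"
  using assms(3)
proof (induction t)
  case 0 then show ?case by simp
next
  case (Suc t)
  then have "t < N" by simp
  then have "traj f y v t \<in> Y \<and> v t \<in> A (traj f y v t)" using traj_adm[OF assms(1,2)] by blast
  then have "V (traj f y v t) \<le> V (traj f y v (Suc t))" using V_mono by simp
  then show ?case using Suc by simp
qed


lemma FSE:
  fixes p :: "nat \<Rightarrow> nat \<Rightarrow> 'c::metric_space"
  assumes K: "compact K" and pK: "\<forall>j t. t < N \<longrightarrow> p j t \<in> K"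
  shows "\<exists>\<sigma> q. strict_mono \<sigma> \<and> (\<forall>t<N. (\<lambda>j. p (\<sigma> j) t) \<longlonglongrightarrow> q t)"
  using pK
proof (induction N)
  case 0
  show ?case by (intro exI[of _ id]) (simp add: strict_mono_def)
next
  case (Suc N)
  then have "\<forall>j t. t < N \<longrightarrow> p j t \<in> K" by simp
  from Suc.IH[OF this] obtain \<sigma> q where sq: "strict_mono \<sigma>" "\<forall>t<N. (\<lambda>j. p (\<sigma> j) t) \<longlonglongrightarrow> q t" by blast
  have pN: "\<And>j. p (\<sigma> j) N \<in> K" using Suc.prems by simp
  have "seq_compact K" using K by (rule compact_imp_seq_compact)
  from this[unfolded seq_compact_def, THEN spec[of _ "\<lambda>j. p (\<sigma> j) N"]] pN
  obtain l r where lr: "strict_mono r" "((\<lambda>j. p (\<sigma> j) N) \<circ> r) \<longlonglongrightarrow> l"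
    by blast
  have "strict_mono (\<sigma> \<circ> r)" using sq(1) lr(1) by (rule strict_mono_o)
  moreover have "\<forall>t<Suc N. (\<lambda>j. p ((\<sigma> \<circ> r) j) t) \<longlonglongrightarrow> (q(N := l)) t"
  proof (intro allI impI)
    fix t assume t: "t < Suc N"
    show "(\<lambda>j. p ((\<sigma> \<circ> r) j) t) \<longlonglongrightarrow> (q(N := l)) t"
    proof (cases "t = N")
      case True then show ?thesis using lr(2) by (simp add: o_def)
    next
      case False
      then have "t < N" using t by simp
      then have "(\<lambda>j. p (\<sigma> j) t) \<longlonglongrightarrow> q t" using sq(2) by simp
      from LIMSEQ_subseq_LIMSEQ[OF this lr(1)] show ?thesis using False by (simp add: o_def)
    qed
  qed
  ultimately show ?case by blast
qed

lemma LIM: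
  assumes r: "r \<longlonglongrightarrow> 0" and pj: "\<forall>j. pseudo (r j) N (y j) (z j) (v j)" and yY: "\<forall>j. y j \<in> Y"
  shows "\<exists>\<sigma> a zz vv. strict_mono \<sigma> \<and> a \<in> Y \<and> (y \<circ> \<sigma>) \<longlonglongrightarrow> a \<and> pseudo 0 N a zz vv
           \<and> (\<lambda>j. cst N (z (\<sigma> j)) (v (\<sigma> j))) \<longlonglongrightarrow> cst N zz vv"
proof -
  have "seq_compact Y" using Ycpt by (rule compact_imp_seq_compact)
  then obtain a \<sigma>1 where a: "a \<in> Y" "strict_mono \<sigma>1" "(y \<circ> \<sigma>1) \<longlonglongrightarrow> a"
    using yY unfolding seq_compact_def by blast
  define p where "p j t = (z (\<sigma>1 j) t, v (\<sigma>1 j) t)" for j t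
  have pK: "\<forall>j t. t < N \<longrightarrow> p j t \<in> Y \<times> U0"
  proof (intro allI impI)
    fix j t assume "t < N"
    then have "z (\<sigma>1 j) t \<in> Y \<and> v (\<sigma>1 j) t \<in> A (z (\<sigma>1 j) t)" using pj unfolding pseudo_def by blast
    then show "p j t \<in> Y \<times> U0" unfolding p_def using A_U0 by blast
  qed
  have cK: "compact (Y \<times> U0)" using Ycpt U0cpt by (rule compact_Times)
  obtain \<sigma>2 q where sq: "strict_mono \<sigma>2" "\<forall>t<N. (\<lambda>j. p (\<sigma>2 j) t) \<longlonglongrightarrow> q t"
    using FSE[OF cK pK] by blast
  define \<sigma> where "\<sigma> = \<sigma>1 \<circ> \<sigma>2"
  have sm: "strict_mono \<sigma>" unfolding \<sigma>_def using a(2) sq(1) by (rule strict_mono_o)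
  define zz where "zz t = fst (q t)" for t
  define vv where "vv t = snd (q t)" for t
  have zc: "(\<lambda>j. z (\<sigma> j) t) \<longlonglongrightarrow> zz t" if "t < N" for t
    using tendsto_fst[OF sq(2)[rule_format, OF that]] unfolding p_def zz_def \<sigma>_def by (simp add: o_def)
  have vc: "(\<lambda>j. v (\<sigma> j) t) \<longlonglongrightarrow> vv t" if "t < N" for t
    using tendsto_snd[OF sq(2)[rule_format, OF that]] unfolding p_def vv_def \<sigma>_def by (simp add: o_def)
  have yc: "(y \<circ> \<sigma>) \<longlonglongrightarrow> a"
    using LIMSEQ_subseq_LIMSEQ[OF a(3) sq(1)] unfolding \<sigma>_def by (simp add: o_assoc)
  have rc: "(\<lambda>j. r (\<sigma> j)) \<longlonglongrightarrow> 0"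
    using LIMSEQ_subseq_LIMSEQ[OF r sm] by (simp add: o_def)
  have adm_j: "z (\<sigma> j) t \<in> Y \<and> v (\<sigma> j) t \<in> A (z (\<sigma> j) t)" if "t < N" for j t
    using pj that unfolding pseudo_def by blast
  have G: "zz t \<in> Y \<and> vv t \<in> A (zz t)" if "t < N" for t
    using G_closed[OF zc[OF that] vc[OF that]] adm_j[OF that] by blast
  have vU0j: "\<forall>j. v (\<sigma> j) t \<in> U0" if "t < N" for t using adm_j[OF that] A_U0 by blast
  have vvU0: "vv t \<in> U0" if "t < N" for t using G[OF that] A_U0 by blast
  have ps: "pseudo 0 N a zz vv"
    unfolding pseudo_def
  proof (intro conjI allI impI)
    assume N: "0 < N"
    have "(\<lambda>j. dist (y (\<sigma> j)) (z (\<sigma> j) 0)) \<longlonglongrightarrow> dist a (zz 0)"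
      using yc zc[OF N] by (intro tendsto_dist) (simp_all add: o_def)
    moreover have "\<forall>j. dist (y (\<sigma> j)) (z (\<sigma> j) 0) \<le> r (\<sigma> j)" using pj N unfolding pseudo_def by blast
    ultimately show "dist a (zz 0) \<le> 0" using rc by (intro LIMSEQ_le) auto
  next
    fix t assume "t < N" then show "zz t \<in> Y" "vv t \<in> A (zz t)" using G by auto
  next
    fix t assume t: "Suc t < N"
    then have t': "t < N" by simp
    have "(\<lambda>j. f (z (\<sigma> j) t) (v (\<sigma> j) t)) \<longlonglongrightarrow> f (zz t) (vv t)"
      by (rule tend_f[OF zc[OF t'] vc[OF t'] vU0j[OF t'] vvU0[OF t']])
    then have "(\<lambda>j. dist (f (z (\<sigma> j) t) (v (\<sigma> j) t)) (z (\<sigma> j) (Suc t))) \<longlonglongrightarrow> dist (f (zz t) (vv t)) (zz (Suc t))"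
      using zc[OF t] by (intro tendsto_dist)
    moreover have "\<forall>j. dist (f (z (\<sigma> j) t) (v (\<sigma> j) t)) (z (\<sigma> j) (Suc t)) \<le> r (\<sigma> j)"
      using pj t unfolding pseudo_def by blast
    ultimately show "dist (f (zz t) (vv t)) (zz (Suc t)) \<le> 0" using rc by (intro LIMSEQ_le) auto
  qed
  have "(\<lambda>j. cst N (z (\<sigma> j)) (v (\<sigma> j))) \<longlonglongrightarrow> cst N zz vv"
    unfolding cst_def
  proof (intro tendsto_sum)
    fix t assume "t \<in> {..<N}"
    then have t: "t < N" by simp
    show "(\<lambda>j. k (z (\<sigma> j) t) (v (\<sigma> j) t)) \<longlonglongrightarrow> k (zz t) (vv t)"
      by (rule tend_k[OF zc[OF t] vc[OF t] vU0j[OF t] vvU0[OF t]])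
  qed
  then show ?thesis using sm a(1) yc ps by blast
qed

definition Good :: "real \<Rightarrow> nat \<Rightarrow> 'a \<Rightarrow> bool" where
  "Good \<epsilon> T z \<longleftrightarrow> (\<forall>v\<in>UT Y U f z T. cst T (traj f z v) v > real T * (V z - \<epsilon>))"

lemma dist_seq_tendsto:
  fixes zs :: "nat \<Rightarrow> 'c::metric_space"
  assumes "\<forall>j. dist (zs j) z < 1 / real (Suc j)"
  shows "zs \<longlonglongrightarrow> z"
proof -
  have "(\<lambda>j. dist (zs j) z) \<longlonglongrightarrow> 0"
  proof (rule tendsto_sandwich[of "\<lambda>_. 0" _ _ "\<lambda>j. inverse (real (Suc j))"])
    show "\<forall>\<^sub>F n in sequentially. 0 \<le> dist (zs n) z" by simp
    show "\<forall>\<^sub>F n in sequentially. dist (zs n) z \<le> inverse (real (Suc n))"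
      using assms by (simp add: divide_inverse less_imp_le del: of_nat_Suc)
    show "(\<lambda>_. 0::real) \<longlonglongrightarrow> 0" by simp
    show "(\<lambda>j. inverse (real (Suc j))) \<longlonglongrightarrow> 0" by (rule LIMSEQ_inverse_real_of_nat)
  qed
  then show ?thesis using tendsto_dist_iff by blast
qed

lemma Good_open:
  assumes z: "z \<in> Y" and g: "Good \<epsilon> T z"
  shows "\<exists>\<rho>>0. \<forall>z'\<in>Y. dist z' z < \<rho> \<longrightarrow> Good \<epsilon> T z'"
proof (rule ccontr)
  assume "\<not> ?thesis"
  then have "\<forall>j. \<exists>z'. z' \<in> Y \<and> dist z' z < 1 / real (Suc j) \<and> \<not> Good \<epsilon> T z'"
    by (metis of_nat_0_less_iff zero_less_Suc zero_less_divide_1_iff)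
  then obtain zs where zs: "\<forall>j. zs j \<in> Y \<and> dist (zs j) z < 1 / real (Suc j) \<and> \<not> Good \<epsilon> T (zs j)"
    by (rule choice[THEN exE]) blast
  have "\<forall>j. \<exists>v. v \<in> UT Y U f (zs j) T \<and> cst T (traj f (zs j) v) v \<le> real T * (V (zs j) - \<epsilon>)"
    using zs unfolding Good_def by (auto simp: not_less)
  then obtain vs where vs: "\<forall>j. vs j \<in> UT Y U f (zs j) T \<and> cst T (traj f (zs j) (vs j)) (vs j) \<le> real T * (V (zs j) - \<epsilon>)"
    by (rule choice[THEN exE]) blast
  have T: "0 < T"
  proof (rule ccontr)
    assume "\<not> 0 < T"
    then have "T = 0" by simp
    obtain v where "v \<in> UT Y U f z T" using UT_ex z by blast
    then show False using g \<open>T = 0\<close> unfolding Good_def by (auto simp: cst_def)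
  qed
  have zsz: "zs \<longlonglongrightarrow> z" using zs dist_seq_tendsto by blast
  have pj: "\<forall>j. pseudo ((\<lambda>_. 0) j) T (zs j) (traj f (zs j) (vs j)) (vs j)"
    using true_pseudo zs vs by simp
  obtain \<sigma> a zz vv where L: "strict_mono \<sigma>" "a \<in> Y" "(zs \<circ> \<sigma>) \<longlonglongrightarrow> a" "pseudo 0 T a zz vv"
    "(\<lambda>j. cst T (traj f (zs (\<sigma> j)) (vs (\<sigma> j))) (vs (\<sigma> j))) \<longlonglongrightarrow> cst T zz vv"
    using LIM[OF tendsto_const pj] zs by blast
  have "(zs \<circ> \<sigma>) \<longlonglongrightarrow> z" using LIMSEQ_subseq_LIMSEQ[OF zsz L(1)] .
  then have az: "a = z" using L(3) LIMSEQ_unique by blast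
  have Vc: "(\<lambda>j. V (zs (\<sigma> j))) \<longlonglongrightarrow> V z"
    using continuous_on_tendsto_compose[OF V_cont \<open>(zs \<circ> \<sigma>) \<longlonglongrightarrow> z\<close> z] zs by (simp add: o_def)
  have lim2: "(\<lambda>j. real T * (V (zs (\<sigma> j)) - \<epsilon>)) \<longlonglongrightarrow> real T * (V z - \<epsilon>)"
    by (intro tendsto_intros Vc)
  have le: "\<forall>j. cst T (traj f (zs (\<sigma> j)) (vs (\<sigma> j))) (vs (\<sigma> j)) \<le> real T * (V (zs (\<sigma> j)) - \<epsilon>)"
    using vs by blast
  have "cst T zz vv \<le> real T * (V z - \<epsilon>)"
    by (rule LIMSEQ_le[OF L(5) lim2]) (use le in blast)
  moreover have "vv \<in> UT Y U f z T" "cst T (traj f z vv) vv = cst T zz vv"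
    using pseudo0_traj[OF L(4) T] az by auto
  ultimately show False using g unfolding Good_def by fastforce
qed


lemma Good_eventually:
  assumes e: "\<epsilon> > 0" and z: "z \<in> Y"
  shows "\<exists>T\<ge>1. Good \<epsilon> T z"
proof -
  have "(\<lambda>T. VT Y U f k z T) \<longlonglongrightarrow> V z" using V_lim z by blast
  then have "eventually (\<lambda>T. V z - \<epsilon> < VT Y U f k z T) sequentially"
    by (rule order_tendstoD(1)) (use e in simp)
  then obtain M where M: "\<forall>T\<ge>M. V z - \<epsilon> < VT Y U f k z T" unfolding eventually_sequentially by blast
  have "Good \<epsilon> (Suc M) z" unfolding Good_def
  proof
    fix v assume v: "v \<in> UT Y U f z (Suc M)"
    have "real (Suc M) * (V z - \<epsilon>) < real (Suc M) * VT Y U f k z (Suc M)"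
      using M by (intro mult_strict_left_mono) auto
    also have "\<dots> \<le> cst (Suc M) (traj f z v) v" by (rule VT_le[OF z v])
    finally show "real (Suc M) * (V z - \<epsilon>) < cst (Suc M) (traj f z v) v" .
  qed
  then show ?thesis by (intro exI[of _ "Suc M"]) simp
qed

lemma cover:
  assumes e: "\<epsilon> > 0"
  shows "\<exists>Tm. \<forall>z\<in>Y. \<exists>T. 1 \<le> T \<and> T \<le> Tm \<and> Good \<epsilon> T z"
proof -
  define Tz where "Tz z = (SOME T. T \<ge> 1 \<and> Good \<epsilon> T z)" for z
  have Tz: "Tz z \<ge> 1 \<and> Good \<epsilon> (Tz z) z" if "z \<in> Y" for z
    unfolding Tz_def using Good_eventually[OF e that] by (rule someI_ex)
  define \<rho> where "\<rho> z = (SOME \<rho>. \<rho> > 0 \<and> (\<forall>z'\<in>Y. dist z' z < \<rho> \<longrightarrow> Good \<epsilon> (Tz z) z'))" for z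
  have \<rho>: "\<rho> z > 0 \<and> (\<forall>z'\<in>Y. dist z' z < \<rho> z \<longrightarrow> Good \<epsilon> (Tz z) z')" if "z \<in> Y" for z
    unfolding \<rho>_def using Good_open[OF that conjunct2[OF Tz[OF that]]] by (rule someI_ex)
  have cov: "Y \<subseteq> \<Union> ((\<lambda>z. ball z (\<rho> z)) ` Y)"
  proof
    fix z assume "z \<in> Y"
    then have "z \<in> ball z (\<rho> z)" using \<rho> by simp
    then show "z \<in> \<Union> ((\<lambda>z. ball z (\<rho> z)) ` Y)" using \<open>z \<in> Y\<close> by blast
  qed
  obtain C where C: "C \<subseteq> Y" "finite C" "Y \<subseteq> \<Union> ((\<lambda>z. ball z (\<rho> z)) ` C)"
    using compactE_image[OF Ycpt _ cov] by blast
  define Tm where "Tm = Max (insert 1 (Tz ` C))"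
  have "\<exists>T. 1 \<le> T \<and> T \<le> Tm \<and> Good \<epsilon> T z" if z: "z \<in> Y" for z
  proof -
    obtain c where c: "c \<in> C" "z \<in> ball c (\<rho> c)" using C(3) z by blast
    have cY: "c \<in> Y" using c C by blast
    have "dist z c < \<rho> c" using c(2) by (simp add: dist_commute)
    then have "Good \<epsilon> (Tz c) z" using \<rho>[OF cY] z by blast
    moreover have "Tz c \<le> Tm" unfolding Tm_def using C(2) c(1) by (intro Max_ge) auto
    ultimately show ?thesis using Tz[OF cY] by blast
  qed
  then show ?thesis by blast
qed

lemma block:
  assumes e: "\<epsilon> > 0"
  shows "\<exists>D. \<forall>N. \<forall>z\<in>Y. \<forall>v\<in>UT Y U f z N. cst N (traj f z v) v \<ge> real N * (V z - \<epsilon>) - D"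
proof -
  obtain Tm where Tm: "\<forall>z\<in>Y. \<exists>T. 1 \<le> T \<and> T \<le> Tm \<and> Good \<epsilon> T z" using cover[OF e] by blast
  define D where "D = real Tm * (BV + Ck)"
  have "\<forall>z\<in>Y. \<forall>v\<in>UT Y U f z N. cst N (traj f z v) v \<ge> real N * (V z - \<epsilon>) - D" for N
  proof (induction N rule: less_induct)
    case (less N)
    show ?case
    proof (intro ballI)
      fix z v assume z: "z \<in> Y" and v: "v \<in> UT Y U f z N"
      obtain T where T: "1 \<le> T" "T \<le> Tm" "Good \<epsilon> T z" using Tm z by blast
      have Vz: "V z \<le> BV" using BV(2)[OF z] by simp
      show "cst N (traj f z v) v \<ge> real N * (V z - \<epsilon>) - D"
      proof (cases "N < T")
        case True
        have lb: "cst N (traj f z v) v \<ge> - (real N * Ck)" by (rule cst_lb[OF traj_adm[OF z v]])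
        have "real N * (V z - \<epsilon>) \<le> real N * BV" using Vz e by (intro mult_left_mono) auto
        moreover have "real N * (BV + Ck) \<le> real Tm * (BV + Ck)"
          using True T(2) BV(1) Ck(1) by (intro mult_right_mono) auto
        ultimately show ?thesis using lb unfolding D_def by (simp add: algebra_simps)
      next
        case False
        then have TN: "T \<le> N" by simp
        define w where "w = traj f z v T"
        define v' where "v' = (\<lambda>s. v (s + T))"
        have wY: "w \<in> Y" unfolding w_def using traj_Y[OF z v TN] .
        have v': "v' \<in> UT Y U f w (N - T)" unfolding v'_def w_def by (rule UT_shift[OF v TN])
        have split: "cst N (traj f z v) v = cst T (traj f z v) v + cst (N - T) (traj f w v') v'"
        proof -
          have "cst N (traj f z v) v = cst (T + (N - T)) (traj f z v) v" using TN by simp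
          also have "\<dots> = cst T (traj f z v) v + (\<Sum>s<N - T. k (traj f z v (T + s)) (v (T + s)))"
            unfolding cst_def by (rule sum_split_add)
          also have "(\<Sum>s<N - T. k (traj f z v (T + s)) (v (T + s))) = cst (N - T) (traj f w v') v'"
            unfolding cst_def w_def v'_def by (intro sum.cong refl) (simp add: traj_shift add.commute)
          finally show ?thesis .
        qed
        have first: "cst T (traj f z v) v > real T * (V z - \<epsilon>)"
          using T(3) UT_mono[OF v TN] unfolding Good_def by blast
        have "N - T < N" using T(1) TN by simp
        then have second: "cst (N - T) (traj f w v') v' \<ge> real (N - T) * (V w - \<epsilon>) - D"
          using less.IH wY v' by blast
        have "V z \<le> V w" unfolding w_def by (rule V_mono_traj[OF z v TN])
        then have "real (N - T) * (V z - \<epsilon>) \<le> real (N - T) * (V w - \<epsilon>)" by (intro mult_left_mono) auto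
        moreover have "real (N - T) = real N - real T" using TN by (simp add: of_nat_diff)
        ultimately show ?thesis using split first second by (simp add: algebra_simps)
      qed
    qed
  qed
  then show ?thesis by blast
qed

lemma stepA:
  assumes e: "\<epsilon> > 0"
  shows "\<exists>N0. \<forall>N\<ge>N0. \<forall>z\<in>Y. \<forall>v\<in>UT Y U f z N. cst N (traj f z v) v \<ge> real N * (V z - \<epsilon>)"
proof -
  obtain D where D: "\<forall>N. \<forall>z\<in>Y. \<forall>v\<in>UT Y U f z N. cst N (traj f z v) v \<ge> real N * (V z - \<epsilon>/2) - D"
    using block[of "\<epsilon>/2"] e by auto
  define N0 where "N0 = nat \<lceil>2 * D / \<epsilon>\<rceil>"
  have "cst N (traj f z v) v \<ge> real N * (V z - \<epsilon>)" if N: "N \<ge> N0" and z: "z \<in> Y" and v: "v \<in> UT Y U f z N" for N z v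
  proof -
    have "2 * D / \<epsilon> \<le> real N0" unfolding N0_def by (rule real_nat_ceiling_ge)
    also have "\<dots> \<le> real N" using N by simp
    finally have "2 * D / \<epsilon> \<le> real N" .
    then have "2 * D \<le> real N * \<epsilon>" using e by (simp add: divide_le_eq)
    moreover have "cst N (traj f z v) v \<ge> real N * (V z - \<epsilon>/2) - D" using D z v by blast
    ultimately show ?thesis by (simp add: algebra_simps)
  qed
  then show ?thesis by blast
qed

lemma stepB:
  assumes e: "\<epsilon> > 0"
    and hyp: "\<forall>z\<in>Y. \<forall>v\<in>UT Y U f z N. cst N (traj f z v) v \<ge> real N * (V z - \<epsilon>)"
  shows "\<exists>r>0. \<forall>y\<in>Y. \<forall>z v. pseudo r N y z v \<longrightarrow> cst N z v \<ge> real N * (V y - 2 * \<epsilon>)"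
proof (rule ccontr)
  assume na: "\<not> ?thesis"
  have ex: "\<exists>p. fst p \<in> Y \<and> pseudo (inverse (real (Suc j))) N (fst p) (fst (snd p)) (snd (snd p))
           \<and> cst N (fst (snd p)) (snd (snd p)) < real N * (V (fst p) - 2 * \<epsilon>)" for j
  proof -
    have pos: "inverse (real (Suc j)) > 0" by simp
    have na': "\<forall>r>0. \<exists>y\<in>Y. \<exists>z v. pseudo r N y z v \<and> cst N z v < real N * (V y - 2 * \<epsilon>)"
      using na by (simp add: not_le)
    from na'[rule_format, OF pos] obtain y z v where "y \<in> Y" "pseudo (inverse (real (Suc j))) N y z v"
      "cst N z v < real N * (V y - 2 * \<epsilon>)" by blast
    then show ?thesis by (intro exI[of _ "(y, z, v)"]) simp
  qed
  have ex2: "\<forall>j. \<exists>p. fst p \<in> Y \<and> pseudo (inverse (real (Suc j))) N (fst p) (fst (snd p)) (snd (snd p))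
           \<and> cst N (fst (snd p)) (snd (snd p)) < real N * (V (fst p) - 2 * \<epsilon>)"
    using ex by blast
  obtain F where F: "\<forall>j. fst (F j) \<in> Y \<and> pseudo (inverse (real (Suc j))) N (fst (F j)) (fst (snd (F j))) (snd (snd (F j)))
           \<and> cst N (fst (snd (F j))) (snd (snd (F j))) < real N * (V (fst (F j)) - 2 * \<epsilon>)"
    using choice[OF ex2] by blast
  define ys where "ys j = fst (F j)" for j
  define zs where "zs j = fst (snd (F j))" for j
  define vs where "vs j = snd (snd (F j))" for j
  have F': "\<forall>j. ys j \<in> Y \<and> pseudo (inverse (real (Suc j))) N (ys j) (zs j) (vs j)
           \<and> cst N (zs j) (vs j) < real N * (V (ys j) - 2 * \<epsilon>)"
    using F unfolding ys_def zs_def vs_def by blast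
  have N: "0 < N"
  proof (rule ccontr)
    assume "\<not> 0 < N"
    then have "N = 0" by simp
    then show False using F'[rule_format, of 0] by (simp add: cst_def)
  qed
  have pj: "\<forall>j. pseudo (inverse (real (Suc j))) N (ys j) (zs j) (vs j)" using F' by blast
  have yY: "\<forall>j. ys j \<in> Y" using F' by blast
  obtain \<sigma> a zz vv where L: "strict_mono \<sigma>" "a \<in> Y" "(ys \<circ> \<sigma>) \<longlonglongrightarrow> a" "pseudo 0 N a zz vv"
    "(\<lambda>j. cst N (zs (\<sigma> j)) (vs (\<sigma> j))) \<longlonglongrightarrow> cst N zz vv"
    using LIM[OF LIMSEQ_inverse_real_of_nat pj yY] by blast
  have Vc: "(\<lambda>j. V (ys (\<sigma> j))) \<longlonglongrightarrow> V a"
    using continuous_on_tendsto_compose[OF V_cont L(3) L(2)] yY by (simp add: o_def)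
  have lim2: "(\<lambda>j. real N * (V (ys (\<sigma> j)) - 2 * \<epsilon>)) \<longlonglongrightarrow> real N * (V a - 2 * \<epsilon>)"
    by (intro tendsto_intros Vc)
  have le: "\<forall>j. cst N (zs (\<sigma> j)) (vs (\<sigma> j)) \<le> real N * (V (ys (\<sigma> j)) - 2 * \<epsilon>)"
    using F' less_imp_le by blast
  have c1: "cst N zz vv \<le> real N * (V a - 2 * \<epsilon>)"
    by (rule LIMSEQ_le[OF L(5) lim2]) (use le in blast)
  have "vv \<in> UT Y U f a N" "cst N (traj f a vv) vv = cst N zz vv"
    using pseudo0_traj[OF L(4) N] by auto
  then have c2: "cst N zz vv \<ge> real N * (V a - \<epsilon>)" using hyp L(2) by metis
  have "real N * \<epsilon> > 0" using N e by simp
  then show False using c1 c2 by (simp add: algebra_simps)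
qed


definition infconv :: "real \<Rightarrow> ('a \<Rightarrow> real) \<Rightarrow> 'a \<Rightarrow> real" where
  "infconv L \<phi> y = Inf ((\<lambda>z. \<phi> z + L * dist y z) ` Y)"

definition phi :: "('a \<Rightarrow> real) \<Rightarrow> 'a \<Rightarrow> real" where
  "phi g y = Inf ((\<lambda>u. k y u + g (f y u)) ` A y)"

primrec gs :: "real \<Rightarrow> nat \<Rightarrow> 'a \<Rightarrow> real" where
  "gs r 0 = (\<lambda>_. 0)"
| "gs r (Suc T) = infconv ((2 * (real T + 1) * Ck + 1) / r) (phi (gs r T))"

lemma infconv_props:
  assumes lo: "\<forall>z\<in>Y. lo \<le> \<phi> z" and L: "L \<ge> 0"
  shows "\<And>y. y \<in> Y \<Longrightarrow> infconv L \<phi> y \<le> \<phi> y"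
    and "\<And>y. lo \<le> infconv L \<phi> y"
    and "\<And>y y'. dist (infconv L \<phi> y) (infconv L \<phi> y') \<le> L * dist y y'"
    and "\<And>y z. z \<in> Y \<Longrightarrow> infconv L \<phi> y \<le> \<phi> z + L * dist y z"
proof -
  have bdd: "bdd_below ((\<lambda>z. \<phi> z + L * dist y z) ` Y)" for y
  proof (rule bdd_belowI)
    fix x assume "x \<in> (\<lambda>z. \<phi> z + L * dist y z) ` Y"
    then obtain z where "z \<in> Y" "x = \<phi> z + L * dist y z" by blast
    moreover have "L * dist y z \<ge> 0" using L by simp
    ultimately show "lo \<le> x" using lo by fastforce
  qed
  show le: "infconv L \<phi> y \<le> \<phi> z + L * dist y z" if "z \<in> Y" for y z
    unfolding infconv_def using that bdd by (intro cInf_lower) auto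
  show "infconv L \<phi> y \<le> \<phi> y" if "y \<in> Y" for y
    using le[OF that, of y] by simp
  show "lo \<le> infconv L \<phi> y" for y
    unfolding infconv_def
  proof (rule cInf_greatest)
    show "(\<lambda>z. \<phi> z + L * dist y z) ` Y \<noteq> {}" using Yne by simp
    fix x assume "x \<in> (\<lambda>z. \<phi> z + L * dist y z) ` Y"
    then obtain z where "z \<in> Y" "x = \<phi> z + L * dist y z" by blast
    moreover have "L * dist y z \<ge> 0" using L by simp
    ultimately show "lo \<le> x" using lo by fastforce
  qed
  have one: "infconv L \<phi> y - L * dist y y' \<le> infconv L \<phi> y'" for y y'
    unfolding infconv_def[of L \<phi> y']
  proof (rule cInf_greatest)
    show "(\<lambda>z. \<phi> z + L * dist y' z) ` Y \<noteq> {}" using Yne by simp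
    fix x assume "x \<in> (\<lambda>z. \<phi> z + L * dist y' z) ` Y"
    then obtain z where z: "z \<in> Y" "x = \<phi> z + L * dist y' z" by blast
    have "dist y z \<le> dist y y' + dist y' z" by (rule dist_triangle)
    then have "L * dist y z \<le> L * dist y y' + L * dist y' z" using L
      by (metis distrib_left mult_left_mono)
    then show "infconv L \<phi> y - L * dist y y' \<le> x" using le[OF z(1), of y] z(2) by simp
  qed
  show "dist (infconv L \<phi> y) (infconv L \<phi> y') \<le> L * dist y y'" for y y'
    using one[of y y'] one[of y' y] by (simp add: dist_real_def dist_commute abs_le_iff)
qed

lemma phi_props:
  assumes g: "\<forall>x\<in>Y. \<bar>g x\<bar> \<le> B" and y: "y \<in> Y"
  shows "\<And>u. u \<in> A y \<Longrightarrow> phi g y \<le> k y u + g (f y u)"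
    and "- (Ck + B) \<le> phi g y" and "phi g y \<le> Ck + B"
proof -
  have el: "- (Ck + B) \<le> k y u + g (f y u) \<and> k y u + g (f y u) \<le> Ck + B" if "u \<in> A y" for u
  proof -
    have "u \<in> U0" "f y u \<in> Y" using that y A_U0 by (auto simp: A_iff)
    then have "\<bar>k y u\<bar> \<le> Ck" "\<bar>g (f y u)\<bar> \<le> B" using Ck(2) y g by auto
    then show ?thesis by (simp add: abs_le_iff)
  qed
  have bdd: "bdd_below ((\<lambda>u. k y u + g (f y u)) ` A y)"
    by (rule bdd_belowI[of _ "- (Ck + B)"]) (use el in auto)
  show le: "phi g y \<le> k y u + g (f y u)" if "u \<in> A y" for u
    unfolding phi_def using that bdd by (intro cInf_lower) auto
  have ne: "A y \<noteq> {}" using A_ne y by blast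
  then obtain u where u: "u \<in> A y" by blast
  show "phi g y \<le> Ck + B" using le[OF u] el[OF u] by simp
  show "- (Ck + B) \<le> phi g y"
    unfolding phi_def by (rule cInf_greatest) (use ne el in auto)
qed

context
  fixes r :: real assumes r: "r > 0"
begin

lemma gs_props:
  shows "\<forall>x\<in>Y. \<bar>gs r T x\<bar> \<le> real T * Ck"
    and "\<exists>L\<ge>0. L-lipschitz_on Y (gs r T)"
proof (induction T)
  case 0
  { case 1 show ?case by simp }
  { case 2 show ?case by (intro exI[of _ 0]) (simp add: lipschitz_on_def) }
next
  case (Suc T)
  define L where "L = (2 * (real T + 1) * Ck + 1) / r"
  have L0: "L \<ge> 0" unfolding L_def using r Ck(1) by simp
  have ph: "\<forall>z\<in>Y. - (Ck + real T * Ck) \<le> phi (gs r T) z" using phi_props(2)[OF Suc.IH(1)] by blast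
  have ph2: "\<forall>z\<in>Y. phi (gs r T) z \<le> Ck + real T * Ck" using phi_props(3)[OF Suc.IH(1)] by blast
  { case 1
    show ?case
    proof
      fix x assume x: "x \<in> Y"
      have "- (Ck + real T * Ck) \<le> gs r (Suc T) x" unfolding gs.simps L_def[symmetric]
        by (rule infconv_props(2)[OF ph L0])
      moreover have "gs r (Suc T) x \<le> Ck + real T * Ck" unfolding gs.simps L_def[symmetric]
        using infconv_props(1)[OF ph L0 x] ph2 x by fastforce
      ultimately show "\<bar>gs r (Suc T) x\<bar> \<le> real (Suc T) * Ck" by (simp add: abs_le_iff algebra_simps)
    qed }
  { case 2
    have "L-lipschitz_on Y (gs r (Suc T))" unfolding gs.simps L_def[symmetric]
      by (rule lipschitz_onI) (use infconv_props(3)[OF ph L0] L0 in auto)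
    then show ?case using L0 by blast }
qed

lemma gs_cont: "continuous_on Y (gs r T)"
  using gs_props(2)[of T] lipschitz_on_continuous_on by blast

lemma gs_bellman:
  assumes y: "y \<in> Y" and u: "u \<in> A y"
  shows "gs r (Suc T) y \<le> k y u + gs r T (f y u)"
proof -
  define L where "L = (2 * (real T + 1) * Ck + 1) / r"
  have L0: "L \<ge> 0" unfolding L_def using r Ck(1) by simp
  have ph: "\<forall>z\<in>Y. - (Ck + real T * Ck) \<le> phi (gs r T) z" using phi_props(2)[OF gs_props(1)] by blast
  have "gs r (Suc T) y \<le> phi (gs r T) y" unfolding gs.simps L_def[symmetric]
    by (rule infconv_props(1)[OF ph L0 y])
  also have "\<dots> \<le> k y u + gs r T (f y u)" by (rule phi_props(1)[OF gs_props(1) y u])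
  finally show ?thesis .
qed

lemma gs_pseudo:
  assumes "y \<in> Y" "\<delta> > 0"
  shows "\<exists>z v. pseudo r T y z v \<and> cst T z v \<le> gs r T y + \<delta>"
  using assms
proof (induction T arbitrary: y \<delta>)
  case 0
  show ?case by (intro exI[of _ "\<lambda>_. y"] exI[of _ "\<lambda>_. undefined"]) (use 0 in \<open>simp add: pseudo_def cst_def\<close>)
next
  case (Suc T)
  note y = Suc.prems(1) and d = Suc.prems(2)
  define L where "L = (2 * (real T + 1) * Ck + 1) / r"
  have L0: "L \<ge> 0" unfolding L_def using r Ck(1) by simp
  define \<phi> where "\<phi> = phi (gs r T)"
  have ph: "\<forall>z\<in>Y. - (Ck + real T * Ck) \<le> \<phi> z" unfolding \<phi>_def using phi_props(2)[OF gs_props(1)] by blast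
  have ph2: "\<forall>z\<in>Y. \<phi> z \<le> Ck + real T * Ck" unfolding \<phi>_def using phi_props(3)[OF gs_props(1)] by blast
  have gdef: "gs r (Suc T) y = infconv L \<phi> y" unfolding L_def \<phi>_def by simp
  have gle: "gs r (Suc T) y \<le> Ck + real T * Ck"
    using infconv_props(1)[OF ph L0 y] ph2 y gdef by fastforce
  define m where "m = min (\<delta>/2) 1"
  have m: "m > 0" "m \<le> \<delta>/2" "m \<le> 1" unfolding m_def using d by auto
  have "Inf ((\<lambda>z. \<phi> z + L * dist y z) ` Y) < gs r (Suc T) y + m" using gdef m unfolding infconv_def by simp
  from cInf_lessD[OF _ this] obtain z where z: "z \<in> Y" "\<phi> z + L * dist y z < gs r (Suc T) y + m"
    using Yne by blast
  have dz: "dist y z \<le> r"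
  proof (rule ccontr)
    assume "\<not> dist y z \<le> r"
    then have "r < dist y z" by simp
    then have "L * r \<le> L * dist y z" using L0 by (intro mult_left_mono) auto
    moreover have "L * r = 2 * (real T + 1) * Ck + 1" unfolding L_def using r by simp
    ultimately have "\<phi> z + L * dist y z \<ge> - (Ck + real T * Ck) + 2 * (real T + 1) * Ck + 1"
      using ph z(1) by fastforce
    then show False using z(2) gle m(3) by (simp add: algebra_simps)
  qed
  have "L * dist y z \<ge> 0" using L0 by simp
  then have pz: "\<phi> z < gs r (Suc T) y + \<delta>/2" using z(2) m(2) by simp
  have ne: "(\<lambda>u. k z u + gs r T (f z u)) ` A z \<noteq> {}" using A_ne z(1) by blast
  have "Inf ((\<lambda>u. k z u + gs r T (f z u)) ` A z) < \<phi> z + \<delta>/4" unfolding \<phi>_def phi_def using d by simp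
  from cInf_lessD[OF ne this] obtain u where u: "u \<in> A z" "k z u + gs r T (f z u) < \<phi> z + \<delta>/4" by blast
  have fz: "f z u \<in> Y" using u(1) by (simp add: A_iff)
  obtain z' v' where zv: "pseudo r T (f z u) z' v'" "cst T z' v' \<le> gs r T (f z u) + \<delta>/4"
    using Suc.IH[OF fz] d by (metis zero_less_divide_iff zero_less_numeral)
  define Z where "Z = (\<lambda>t. if t = 0 then z else z' (t - 1))"
  define W where "W = (\<lambda>t. if t = 0 then u else v' (t - 1))"
  have ps: "pseudo r (Suc T) y Z W"
    unfolding pseudo_def
  proof (intro conjI allI impI)
    show "dist y (Z 0) \<le> r" using dz by (simp add: Z_def)
  next
    fix t assume t: "t < Suc T"
    show "Z t \<in> Y" "W t \<in> A (Z t)"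
    proof -
      have "Z t \<in> Y \<and> W t \<in> A (Z t)"
      proof (cases t)
        case 0 then show ?thesis using z(1) u(1) by (simp add: Z_def W_def)
      next
        case (Suc s)
        then have "s < T" using t by simp
        then show ?thesis using zv(1) Suc unfolding pseudo_def Z_def W_def by simp
      qed
      then show "Z t \<in> Y" "W t \<in> A (Z t)" by auto
    qed
  next
    fix t assume t: "Suc t < Suc T"
    show "dist (f (Z t) (W t)) (Z (Suc t)) \<le> r"
    proof (cases t)
      case 0
      then have "0 < T" using t by simp
      then show ?thesis using zv(1) 0 unfolding pseudo_def Z_def W_def by simp
    next
      case (Suc s)
      then have "Suc s < T" using t by simp
      then show ?thesis using zv(1) Suc unfolding pseudo_def Z_def W_def by simp
    qed
  qed
  have "cst (Suc T) Z W = k z u + cst T z' v'"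
    unfolding cst_def sum.lessThan_Suc_shift by (simp add: Z_def W_def)
  also have "\<dots> \<le> gs r (Suc T) y + \<delta>" using zv(2) u(2) pz by simp
  finally show ?case using ps by blast
qed

end

lemma V_le_dstar:
  assumes y0: "y0 \<in> Y"
  shows "ereal (V y0) \<le> dstar Y U f k y0"
proof (rule ereal_le_epsilon2)
  fix e :: real assume e: "e > 0"
  define \<epsilon> where "\<epsilon> = e / 2"
  have eps: "\<epsilon> > 0" unfolding \<epsilon>_def using e by simp
  obtain N0 where N0: "\<forall>N\<ge>N0. \<forall>z\<in>Y. \<forall>v\<in>UT Y U f z N. cst N (traj f z v) v \<ge> real N * (V z - \<epsilon>)"
    using stepA[OF eps] by blast
  define N where "N = max N0 1"
  have N1: "N \<ge> 1" unfolding N_def by simp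
  have hyp: "\<forall>z\<in>Y. \<forall>v\<in>UT Y U f z N. cst N (traj f z v) v \<ge> real N * (V z - \<epsilon>)"
    using N0 unfolding N_def by simp
  obtain r where r: "r > 0" "\<forall>y\<in>Y. \<forall>z v. pseudo r N y z v \<longrightarrow> cst N z v \<ge> real N * (V y - 2 * \<epsilon>)"
    using stepB[OF eps hyp] by blast
  define \<eta> where "\<eta> y = (1 / real N) * (\<Sum>T<N. gs r T y)" for y
  have gN: "gs r N y \<ge> real N * (V y - 2 * \<epsilon>)" if y: "y \<in> Y" for y
  proof (rule field_le_epsilon)
    fix \<delta> :: real assume d: "\<delta> > 0"
    obtain z v where "pseudo r N y z v" "cst N z v \<le> gs r N y + \<delta>" using gs_pseudo[OF r(1) y d] by blast
    then show "real N * (V y - 2 * \<epsilon>) \<le> gs r N y + \<delta>" using r(2) y by fastforce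
  qed
  have cont: "continuous_on Y \<eta>" unfolding \<eta>_def
    by (intro continuous_on_mult continuous_on_const continuous_on_sum gs_cont[OF r(1)])
  have ineq: "k y u + V y0 - V y + \<eta> (f y u) - \<eta> y - (V y0 - 2 * \<epsilon>) \<ge> 0 \<and> V (f y u) - V y \<ge> 0"
    if y: "y \<in> Y" and u: "u \<in> A y" for y u
  proof
    show "V (f y u) - V y \<ge> 0" using V_mono[OF y u] by simp
    have "(\<Sum>T<N. gs r (Suc T) y - k y u - gs r T y) \<le> (\<Sum>T<N. gs r T (f y u) - gs r T y)"
    proof (rule sum_mono)
      fix T
      have "gs r (Suc T) y \<le> k y u + gs r T (f y u)" by (rule gs_bellman[OF r(1) y u])
      then show "gs r (Suc T) y - k y u - gs r T y \<le> gs r T (f y u) - gs r T y" by linarith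
    qed
    moreover have "(\<Sum>T<N. gs r (Suc T) y - k y u - gs r T y) = gs r N y - real N * k y u"
    proof -
      have "(\<Sum>T<N. gs r (Suc T) y - k y u - gs r T y) = (\<Sum>T<N. gs r (Suc T) y - gs r T y) - (\<Sum>T<N. k y u)"
        by (simp only: sum_subtractf[symmetric]) (simp add: algebra_simps)
      also have "\<dots> = gs r N y - real N * k y u"
      proof -
        have tel: "(\<Sum>T<N. gs r (Suc T) y - gs r T y) = gs r N y - gs r 0 y" by (rule sum_lessThan_telescope)
        show ?thesis by (simp only: tel) simp
      qed
      finally show ?thesis .
    qed
    moreover have "\<eta> (f y u) - \<eta> y = (1 / real N) * (\<Sum>T<N. gs r T (f y u) - gs r T y)"
      unfolding \<eta>_def by (simp add: sum_subtractf algebra_simps)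
    ultimately have "\<eta> (f y u) - \<eta> y \<ge> (1 / real N) * (gs r N y - real N * k y u)"
      using N1 by (simp add: divide_right_mono)
    also have "(1 / real N) * (gs r N y - real N * k y u) = gs r N y / real N - k y u"
      using N1 by (simp add: field_simps)
    finally have "\<eta> (f y u) - \<eta> y \<ge> gs r N y / real N - k y u" .
    moreover have "gs r N y / real N \<ge> V y - 2 * \<epsilon>"
      using gN[OF y] N1 by (simp add: le_divide_eq algebra_simps)
    ultimately show "k y u + V y0 - V y + \<eta> (f y u) - \<eta> y - (V y0 - 2 * \<epsilon>) \<ge> 0" by simp
  qed
  have mem: "V y0 - 2 * \<epsilon> \<in> {\<mu>. \<exists>\<psi> \<eta>. continuous_on Y \<psi> \<and> continuous_on Y \<eta> \<and>
      (\<forall>(y, u) \<in> Gset Y U f.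
          k y u + \<psi> y0 - \<psi> y + \<eta> (f y u) - \<eta> y - \<mu> \<ge> 0 \<and> \<psi> (f y u) - \<psi> y \<ge> 0)}"
  proof (intro CollectI exI conjI)
    show "continuous_on Y V" by (rule V_cont)
    show "continuous_on Y \<eta>" by (rule cont)
    show "\<forall>(y, u) \<in> Gset Y U f. k y u + V y0 - V y + \<eta> (f y u) - \<eta> y - (V y0 - 2 * \<epsilon>) \<ge> 0 \<and> V (f y u) - V y \<ge> 0"
    proof
      fix p assume "p \<in> Gset Y U f"
      then obtain y u where p: "p = (y, u)" "y \<in> Y" "u \<in> A y" unfolding Gset_def by blast
      show "case p of (y, u) \<Rightarrow> k y u + V y0 - V y + \<eta> (f y u) - \<eta> y - (V y0 - 2 * \<epsilon>) \<ge> 0 \<and> V (f y u) - V y \<ge> 0"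
        using ineq[OF p(2,3)] p(1) by simp
    qed
  qed
  have "ereal (V y0 - 2 * \<epsilon>) \<le> dstar Y U f k y0"
    unfolding dstar_def by (rule SUP_upper[OF mem])
  then have "ereal (V y0 - e) \<le> dstar Y U f k y0" unfolding \<epsilon>_def by simp
  then show "ereal (V y0) \<le> dstar Y U f k y0 + ereal e"
    by (cases "dstar Y U f k y0") (simp_all add: algebra_simps)
qed


lemma stageS:
  assumes e: "\<epsilon> > 0" and z: "z \<in> Y"
  shows "\<exists>p. fst p \<ge> 1 \<and> snd p \<in> UT Y U f z (fst p) \<and> cst (fst p) (traj f z (snd p)) (snd p) \<le> real (fst p) * (V z + \<epsilon>)
           \<and> V (traj f z (snd p) (fst p)) \<le> V z + \<epsilon>"
proof -
  define \<epsilon>' where "\<epsilon>' = \<epsilon> / 6"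
  have e': "\<epsilon>' > 0" unfolding \<epsilon>'_def using e by simp
  obtain N0 where N0: "\<forall>N\<ge>N0. \<forall>z\<in>Y. \<forall>v\<in>UT Y U f z N. cst N (traj f z v) v \<ge> real N * (V z - \<epsilon>')"
    using stepA[OF e'] by blast
  have "(\<lambda>T. VT Y U f k z T) \<longlonglongrightarrow> V z" using V_lim z by blast
  then have "eventually (\<lambda>T. VT Y U f k z T < V z + \<epsilon>') sequentially"
    by (rule order_tendstoD(2)) (use e' in simp)
  then obtain M where M: "\<forall>T\<ge>M. VT Y U f k z T < V z + \<epsilon>'" unfolding eventually_sequentially by blast
  define m where "m = max (max N0 M) 1"
  have m1: "m \<ge> 1" and mN0: "m \<ge> N0" and mM: "2 * m \<ge> M" unfolding m_def by auto
  have mpos: "real m > 0" using m1 by simp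
  obtain v where v: "v \<in> UT Y U f z (2 * m)" "cst (2 * m) (traj f z v) v < real (2 * m) * VT Y U f k z (2 * m) + real (2 * m) * \<epsilon>'"
    using VT_approx[OF z, of "real (2 * m) * \<epsilon>'" "2 * m"] mpos e' by auto
  have "real (2 * m) * VT Y U f k z (2 * m) < real (2 * m) * (V z + \<epsilon>')"
    using M mM mpos by (intro mult_strict_left_mono) auto
  with v(2) have tot: "cst (2 * m) (traj f z v) v < 2 * real m * (V z + 2 * \<epsilon>')" by (simp add: algebra_simps)
  have mle: "m \<le> 2 * m" by simp
  define w where "w = traj f z v m"
  define v' where "v' = (\<lambda>s. v (s + m))"
  have wY: "w \<in> Y" unfolding w_def using traj_Y[OF z v(1) mle] .
  have v': "v' \<in> UT Y U f w m" using UT_shift[OF v(1) mle] unfolding v'_def w_def by simp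
  have vm: "v \<in> UT Y U f z m" using UT_mono[OF v(1) mle] .
  have split: "cst (2 * m) (traj f z v) v = cst m (traj f z v) v + cst m (traj f w v') v'"
  proof -
    have "cst (2 * m) (traj f z v) v = cst (m + m) (traj f z v) v" by (simp add: mult_2)
    also have "\<dots> = cst m (traj f z v) v + (\<Sum>s<m. k (traj f z v (m + s)) (v (m + s)))"
      unfolding cst_def by (rule sum_split_add)
    also have "(\<Sum>s<m. k (traj f z v (m + s)) (v (m + s))) = cst m (traj f w v') v'"
      unfolding cst_def w_def v'_def by (intro sum.cong refl) (simp add: traj_shift add.commute)
    finally show ?thesis .
  qed
  have F: "cst m (traj f z v) v \<ge> real m * (V z - \<epsilon>')" using N0 mN0 z vm by blast
  have S: "cst m (traj f w v') v' \<ge> real m * (V w - \<epsilon>')" using N0 mN0 wY v' by blast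
  have Vzw: "V z \<le> V w" unfolding w_def by (rule V_mono_traj[OF z v(1) mle])
  then have mzw: "real m * V z \<le> real m * V w" using mpos by (intro mult_left_mono) auto
  have epsq: "\<epsilon> = 6 * \<epsilon>'" unfolding \<epsilon>'_def by simp
  have pe: "real m * \<epsilon>' \<ge> 0" using mpos e' by simp
  have tot': "cst m (traj f z v) v + cst m (traj f w v') v' < 2 * (real m * V z) + 4 * (real m * \<epsilon>')"
    using tot split by (simp add: algebra_simps)
  have F': "cst m (traj f z v) v \<ge> real m * V z - real m * \<epsilon>'" using F by (simp add: algebra_simps)
  have S': "cst m (traj f w v') v' \<ge> real m * V w - real m * \<epsilon>'" using S by (simp add: algebra_simps)
  have "cst m (traj f z v) v \<le> real m * V z + 6 * (real m * \<epsilon>')" using tot' S' mzw pe by linarith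
  then have c1: "cst m (traj f z v) v \<le> real m * (V z + \<epsilon>)" unfolding epsq by (simp add: algebra_simps)
  have "real m * V w < real m * V z + 6 * (real m * \<epsilon>')" using tot' F' S' pe by linarith
  then have "real m * V w < real m * (V z + \<epsilon>)" unfolding epsq by (simp add: algebra_simps)
  then have c2: "V w \<le> V z + \<epsilon>" using mpos by simp
  show ?thesis
    by (intro exI[of _ "(m, v)"]) (use m1 vm c1 c2 in \<open>simp add: w_def\<close>)
qed

lemma good_control:
  assumes d: "\<delta> > 0" and y0: "y0 \<in> Y"
  shows "\<exists>u'\<in>Uinf Y U f y0. avg_cost f k y0 u' \<le> ereal (V y0 + 2 * \<delta>)"
proof -
  define ep where "ep i = \<delta> / 2 ^ Suc i" for i :: nat
  have ep: "ep i > 0" "ep i \<le> \<delta>" for i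
  proof -
    show "ep i > 0" unfolding ep_def using d by simp
    have "(1::real) \<le> 2 ^ Suc i" by (rule one_le_power) simp
    then show "ep i \<le> \<delta>" unfolding ep_def using d by (simp add: divide_le_eq)
  qed
  define Pst where "Pst i z p \<longleftrightarrow> fst p \<ge> 1 \<and> snd p \<in> UT Y U f z (fst p) \<and> cst (fst p) (traj f z (snd p)) (snd p) \<le> real (fst p) * (V z + ep i)
           \<and> V (traj f z (snd p) (fst p)) \<le> V z + ep i" for i z and p :: "nat \<times> (nat \<Rightarrow> 'b)"
  define stage where "stage i z = (SOME p. Pst i z p)" for i z
  have stage: "Pst i z (stage i z)" if "z \<in> Y" for i z
    unfolding stage_def Pst_def by (rule someI_ex) (rule stageS[OF ep(1) that])
  define zs where "zs = rec_nat y0 (\<lambda>i z. traj f z (snd (stage i z)) (fst (stage i z)))"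
  define nn where "nn i = fst (stage i (zs i))" for i
  define vv where "vv i = snd (stage i (zs i))" for i
  have zs0: "zs 0 = y0" unfolding zs_def by simp
  have zsS: "zs (Suc i) = traj f (zs i) (vv i) (nn i)" for i unfolding zs_def nn_def vv_def by simp
  have zsY: "zs i \<in> Y" for i
  proof (induction i)
    case 0 then show ?case using zs0 y0 by simp
  next
    case (Suc i)
    have "Pst i (zs i) (stage i (zs i))" by (rule stage[OF Suc])
    then have "vv i \<in> UT Y U f (zs i) (nn i)" unfolding Pst_def nn_def vv_def by blast
    then show ?case unfolding zsS using traj_Y[OF Suc] by blast
  qed
  have P: "nn i \<ge> 1 \<and> vv i \<in> UT Y U f (zs i) (nn i) \<and> cst (nn i) (traj f (zs i) (vv i)) (vv i) \<le> real (nn i) * (V (zs i) + ep i)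
           \<and> V (zs (Suc i)) \<le> V (zs i) + ep i" for i
    using stage[OF zsY[of i], of i] unfolding Pst_def nn_def vv_def zsS by simp
  have Vzs: "V (zs i) \<le> V y0 + \<delta> - \<delta> / 2 ^ i" for i
  proof (induction i)
    case 0 then show ?case using zs0 by simp
  next
    case (Suc i)
    have "V (zs (Suc i)) \<le> V (zs i) + ep i" using P by blast
    also have "\<dots> \<le> V y0 + \<delta> - \<delta> / 2 ^ i + \<delta> / 2 ^ Suc i" using Suc unfolding ep_def by simp
    also have "\<dots> = V y0 + \<delta> - \<delta> / 2 ^ Suc i" by (simp add: field_simps)
    finally show ?case .
  qed
  have stc: "cst (nn i) (traj f (zs i) (vv i)) (vv i) \<le> real (nn i) * (V y0 + 2 * \<delta>)" for i
  proof -
    have "\<delta> / 2 ^ i \<ge> 0" using d by simp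
    then have "V (zs i) + ep i \<le> V y0 + 2 * \<delta>" using Vzs[of i] ep(2)[of i] by simp
    then have "real (nn i) * (V (zs i) + ep i) \<le> real (nn i) * (V y0 + 2 * \<delta>)" by (intro mult_left_mono) auto
    then show ?thesis using P[of i] by linarith
  qed
  define St where "St i = (\<Sum>j<i. nn j)" for i
  have StS: "St (Suc i) = St i + nn i" for i unfolding St_def by simp
  have St_mono: "St i \<le> St j" if "i \<le> j" for i j
    using lift_Suc_mono_le[of St, OF _ that] StS by simp
  have St_ge: "St i \<ge> i" for i
  proof (induction i)
    case 0 then show ?case by simp
  next
    case (Suc i) then show ?case using StS[of i] P[of i] by simp
  qed
  define idx where "idx t = (LEAST i. t < St (Suc i))" for t
  have ex: "\<exists>i. t < St (Suc i)" for t using St_ge[of "Suc t"] by (intro exI[of _ t]) simp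
  have idx1: "t < St (Suc (idx t))" for t unfolding idx_def by (rule LeastI_ex[OF ex])
  have idx2: "St (idx t) \<le> t" for t
  proof (cases "idx t")
    case 0 then show ?thesis by (simp add: St_def)
  next
    case (Suc i)
    then have "i < idx t" by simp
    then have "\<not> t < St (Suc i)" unfolding idx_def by (rule not_less_Least)
    then show ?thesis using Suc by simp
  qed
  have idx3: "idx t = i" if "St i \<le> t" "t < St (Suc i)" for t i
    unfolding idx_def
  proof (rule Least_equality)
    show "t < St (Suc i)" by (rule that(2))
    fix j assume j: "t < St (Suc j)"
    show "i \<le> j"
    proof (rule ccontr)
      assume "\<not> i \<le> j"
      then have "Suc j \<le> i" by simp
      then have "St (Suc j) \<le> St i" by (rule St_mono)
      then show False using j that(1) by simp
    qed
  qed
  define u' where "u' t = vv (idx t) (t - St (idx t))" for t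
  have u'_at: "u' (St i + s) = vv i s" if "s < nn i" for i s
  proof -
    have "idx (St i + s) = i" using that StS[of i] by (intro idx3) auto
    then show ?thesis unfolding u'_def by simp
  qed
  have inner: "\<forall>s\<le>nn i. traj f y0 u' (St i + s) = traj f (zs i) (vv i) s"
    if h: "traj f y0 u' (St i) = zs i" for i
  proof (intro allI impI)
    fix s assume "s \<le> nn i"
    then show "traj f y0 u' (St i + s) = traj f (zs i) (vv i) s"
    proof (induction s)
      case 0 then show ?case using h by simp
    next
      case (Suc s)
      then have "s < nn i" by simp
      then show ?case using Suc u'_at by simp
    qed
  qed
  have outer: "traj f y0 u' (St i) = zs i" for i
  proof (induction i)
    case 0 then show ?case using zs0 by (simp add: St_def)
  next
    case (Suc i)
    have "traj f y0 u' (St i + nn i) = traj f (zs i) (vv i) (nn i)" using inner[OF Suc] by simp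
    then show ?case using StS zsS by simp
  qed
  have adm: "u' \<in> Uinf Y U f y0"
    unfolding Uinf_def
  proof (intro CollectI allI)
    fix t
    define i where "i = idx t"
    define s where "s = t - St i"
    have ts: "t = St i + s" unfolding s_def i_def using idx2 by simp
    have sn: "s < nn i" using idx1[of t] StS[of i] ts unfolding i_def by simp
    have tr: "traj f y0 u' t = traj f (zs i) (vv i) s" using inner[OF outer] sn ts by simp
    have "vv i s \<in> A (traj f (zs i) (vv i) s)" using P[of i] sn by (simp add: UT_def)
    then show "u' t \<in> A (traj f y0 u' t)" using tr ts u'_at[OF sn] by simp
  qed
  have sumI: "(\<Sum>t<St I. k (traj f y0 u' t) (u' t)) \<le> real (St I) * (V y0 + 2 * \<delta>)" for I
  proof (induction I)
    case 0 then show ?case by (simp add: St_def)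
  next
    case (Suc I)
    have "(\<Sum>t<St (Suc I). k (traj f y0 u' t) (u' t)) = (\<Sum>t<St I. k (traj f y0 u' t) (u' t))
        + (\<Sum>s<nn I. k (traj f y0 u' (St I + s)) (u' (St I + s)))"
      unfolding StS by (rule sum_split_add)
    also have "(\<Sum>s<nn I. k (traj f y0 u' (St I + s)) (u' (St I + s))) = cst (nn I) (traj f (zs I) (vv I)) (vv I)"
      unfolding cst_def using inner[OF outer] u'_at by (intro sum.cong refl) simp
    finally show ?case using Suc stc[of I] StS[of I] by (simp add: algebra_simps)
  qed
  define X where "X T = ereal ((1 / real T) * (\<Sum>t<T. k (traj f y0 u' t) (u' t)))" for T
  define r where "r I = St (Suc I)" for I
  have sm: "strict_mono r" unfolding r_def
    by (rule strict_monoI_Suc) (use StS P in \<open>simp add: Suc_le_eq\<close>)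
  have Xr: "X (r I) \<le> ereal (V y0 + 2 * \<delta>)" for I
  proof -
    have pos: "real (r I) > 0" using St_ge[of "Suc I"] unfolding r_def by simp
    have "(1 / real (r I)) * (\<Sum>t<r I. k (traj f y0 u' t) (u' t)) \<le> (1 / real (r I)) * (real (r I) * (V y0 + 2 * \<delta>))"
      using sumI[of "Suc I"] pos unfolding r_def by (intro mult_left_mono) auto
    also have "\<dots> = V y0 + 2 * \<delta>" using pos by simp
    finally show ?thesis unfolding X_def by simp
  qed
  have "avg_cost f k y0 u' = liminf X" unfolding avg_cost_def X_def by simp
  also have "\<dots> \<le> liminf (X \<circ> r)" by (rule liminf_subseq_mono[OF sm])
  also have "\<dots> \<le> limsup (X \<circ> r)" by (rule Liminf_le_Limsup) simp
  also have "\<dots> \<le> ereal (V y0 + 2 * \<delta>)" by (rule Limsup_bounded) (use Xr in simp)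
  finally show ?thesis using adm by blast
qed

end

lemma periodic_avg:
  fixes a :: "nat \<Rightarrow> real"
  assumes T0: "T0 > 0" and per: "\<forall>t. a (t + T0) = a t"
  shows "(\<lambda>T. (1 / real T) * (\<Sum>t<T. a t)) \<longlonglongrightarrow> (\<Sum>t<T0. a t) / real T0"
proof -
  define S where "S = (\<Sum>t<T0. a t)"
  define P where "P = S / real T0"
  have perq: "a (s + q * T0) = a s" for s q
  proof (induction q)
    case 0 then show ?case by simp
  next
    case (Suc q)
    have "a (s + Suc q * T0) = a ((s + q * T0) + T0)" by (simp add: algebra_simps)
    also have "\<dots> = a (s + q * T0)" using per by blast
    finally show ?case using Suc by simp
  qed
  have sumq: "(\<Sum>t<q * T0. a t) = real q * S" for q
  proof (induction q)
    case 0 then show ?case by simp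
  next
    case (Suc q)
    have "(\<Sum>t<Suc q * T0. a t) = (\<Sum>t<q * T0 + T0. a t)" by (simp add: algebra_simps)
    also have "\<dots> = (\<Sum>t<q * T0. a t) + (\<Sum>s<T0. a (q * T0 + s))" by (rule sum_split_add)
    also have "(\<Sum>s<T0. a (q * T0 + s)) = S" unfolding S_def using perq by (intro sum.cong refl) (simp add: add.commute)
    finally show ?case using Suc by (simp add: algebra_simps)
  qed
  define Cb where "Cb = (\<Sum>t<T0. \<bar>a t\<bar>)"
  define M where "M = Cb + real T0 * \<bar>P\<bar>"
  have bound: "norm ((1 / real T) * (\<Sum>t<T. a t) - P) \<le> M * inverse (real T)" if T: "T > 0" for T
  proof -
    define q where "q = T div T0"
    define m where "m = T mod T0"
    define R where "R = (\<Sum>s<m. a s)"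
    have Tqm: "T = q * T0 + m" unfolding q_def m_def by simp
    have mT0: "m < T0" unfolding m_def using T0 by simp
    have sumT: "(\<Sum>t<T. a t) = real q * S + R"
    proof -
      have "(\<Sum>t<T. a t) = (\<Sum>t<q * T0 + m. a t)" using Tqm by simp
      also have "\<dots> = (\<Sum>t<q * T0. a t) + (\<Sum>s<m. a (q * T0 + s))" by (rule sum_split_add)
      also have "(\<Sum>s<m. a (q * T0 + s)) = R" unfolding R_def using perq by (intro sum.cong refl) (simp add: add.commute)
      finally show ?thesis using sumq by simp
    qed
    have rT: "real T = real q * real T0 + real m" using Tqm by simp
    have T0r: "real T0 > 0" using T0 by simp
    have Tr: "real T > 0" using T by simp
    have eq: "(1 / real T) * (\<Sum>t<T. a t) - P = (R - real m * P) / real T"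
      unfolding sumT P_def using T0r Tr rT by (simp add: field_simps)
    have "\<bar>R\<bar> \<le> (\<Sum>s<m. \<bar>a s\<bar>)" unfolding R_def by (rule sum_abs)
    also have "\<dots> \<le> Cb" unfolding Cb_def using mT0 by (intro sum_mono2) auto
    finally have Rb: "\<bar>R\<bar> \<le> Cb" .
    have "real m * \<bar>P\<bar> \<le> real T0 * \<bar>P\<bar>" using mT0 by (intro mult_right_mono) auto
    moreover have "\<bar>real m * P\<bar> = real m * \<bar>P\<bar>" by (simp add: abs_mult)
    moreover have "\<bar>R - real m * P\<bar> \<le> \<bar>R\<bar> + \<bar>real m * P\<bar>" by (rule abs_triangle_ineq4)
    ultimately have "\<bar>R - real m * P\<bar> \<le> M" unfolding M_def using Rb by linarith
    then show ?thesis unfolding eq using Tr by (simp add: divide_inverse abs_mult)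
  qed
  have g0: "(\<lambda>T. M * inverse (real T)) \<longlonglongrightarrow> 0"
    using tendsto_mult_right_zero[OF tendsto_inverse_0_at_top[OF filterlim_real_sequentially]] by simp
  have "(\<lambda>T. (1 / real T) * (\<Sum>t<T. a t) - P) \<longlonglongrightarrow> 0"
  proof (rule Lim_null_comparison[OF _ g0])
    show "\<forall>\<^sub>F T in sequentially. norm ((1 / real T) * (\<Sum>t<T. a t) - P) \<le> M * inverse (real T)"
      unfolding eventually_sequentially using bound by (intro exI[of _ 1]) auto
  qed
  then have "(\<lambda>T. ((1 / real T) * (\<Sum>t<T. a t) - P) + P) \<longlonglongrightarrow> 0 + P" by (intro tendsto_add tendsto_const)
  then show ?thesis unfolding P_def S_def by simp
qed

theorem proposition4p6:
  fixes Y :: "'a::euclidean_space set" and U0 :: "'b::metric_space set"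
    and U :: "'a \<Rightarrow> 'b set" and f :: "'a \<Rightarrow> 'b \<Rightarrow> 'a" and k :: "'a \<Rightarrow> 'b \<Rightarrow> real"
    and V :: "'a \<Rightarrow> real" and y0 :: 'a and \<psi> \<eta> :: "'a \<Rightarrow> real"
    and y :: "nat \<Rightarrow> 'a" and u :: "nat \<Rightarrow> 'b"
  assumes Y: "compact Y" "Y \<noteq> {}"
    and U0: "compact U0"
    and U_sub: "\<forall>x\<in>Y. U x \<subseteq> U0"
    and U_cpt: "\<forall>x\<in>Y. compact (U x)"
    and U_usc: "usc_on Y U"
    and f_cont: "continuous_on (UNIV \<times> U0) (\<lambda>(x, v). f x v)"
    and k_cont: "continuous_on (UNIV \<times> U0) (\<lambda>(x, v). k x v)"
    and A_ne: "\<forall>x\<in>Y. Aset Y U f x \<noteq> {}"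
    and V_lim: "\<forall>x\<in>Y. (\<lambda>T. VT Y U f k x T) \<longlonglongrightarrow> V x"
    and V_cont: "continuous_on Y V"
    and y0: "y0 \<in> Y"
    and opt_dual: "dual_optimal Y U f k y0 \<psi> \<eta>"
    and y_0: "y 0 = y0"
    and adm: "\<forall>t. u t \<in> Aset Y U f (y t)"
    and dyn: "\<forall>t. y (Suc t) = f (y t) (u t)"
    and periodic: "\<exists>T0::nat. T0 > 0 \<and> (\<forall>t. y (t + T0) = y t \<and> u (t + T0) = u t)"
    and opt: "liminf (\<lambda>T. ereal ((1 / real T) * (\<Sum>t<T. k (y t) (u t))))
              = (INF u' \<in> Uinf Y U f y0. avg_cost f k y0 u')"
  shows "\<forall>t. k (y t) (u t) - \<psi> (y t) + \<eta> (f (y t) (u t)) - \<eta> (y t) = V y0 - \<psi> y0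
             \<and> \<psi> (y t) = \<psi> y0"
proof -
  interpret S: sys Y U0 U f k V
    unfolding sys_def using Y U0 U_sub U_cpt U_usc f_cont k_cont A_ne V_lim V_cont by (intro conjI)
  obtain T0 :: nat where T0: "T0 > 0" and per: "\<forall>t. y (t + T0) = y t \<and> u (t + T0) = u t"
    using periodic by blast
  have yY: "y t \<in> Y" for t
  proof (induction t)
    case 0 then show ?case using y_0 y0 by simp
  next
    case (Suc t)
    have "u t \<in> Aset Y U f (y t)" using adm by blast
    then show ?case using dyn by (simp add: S.A_iff)
  qed
  have G: "(y t, u t) \<in> Gset Y U f" for t using yY adm unfolding Gset_def by simp
  have ytr: "y t = traj f y0 u t" for t
    by (induction t) (simp_all add: y_0 dyn)
  have uinf: "u \<in> Uinf Y U f y0" unfolding Uinf_def using adm ytr by simp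
  have perq: "y (s + q * T0) = y s \<and> u (s + q * T0) = u s" for s q
  proof (induction q)
    case 0 then show ?case by simp
  next
    case (Suc q)
    have "s + Suc q * T0 = (s + q * T0) + T0" by simp
    then show ?case using per Suc by metis
  qed
  have pmod: "y t = y (t mod T0) \<and> u t = u (t mod T0)" for t
    using perq[of "t mod T0" "t div T0"] by simp
  have DO: "\<forall>(a, b) \<in> Gset Y U f. ereal (k a b + \<psi> y0 - \<psi> a + \<eta> (f a b) - \<eta> a) \<ge> dstar Y U f k y0 \<and> \<psi> (f a b) - \<psi> a \<ge> 0"
    using opt_dual unfolding dual_optimal_def by blast
  have DOt: "ereal (k (y t) (u t) + \<psi> y0 - \<psi> (y t) + \<eta> (f (y t) (u t)) - \<eta> (y t)) \<ge> dstar Y U f k y0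
      \<and> \<psi> (f (y t) (u t)) - \<psi> (y t) \<ge> 0" for t
    using DO G[of t] by blast
  have psimono: "\<psi> (y t) \<le> \<psi> (y (Suc t))" for t using DOt[of t] dyn by simp
  have psi_le: "\<psi> (y s) \<le> \<psi> (y t)" if "s \<le> t" for s t
    using lift_Suc_mono_le[of "\<lambda>t. \<psi> (y t)", OF psimono that] .
  have psi_const: "\<psi> (y t) = \<psi> y0" for t
  proof -
    have "\<psi> (y 0) \<le> \<psi> (y t)" by (rule psi_le) simp
    moreover have "t \<le> 0 + t * T0" using T0 by simp
    then have "\<psi> (y t) \<le> \<psi> (y (0 + t * T0))" by (rule psi_le)
    moreover have "y (0 + t * T0) = y 0" using perq[of 0 t] by blast
    ultimately show ?thesis using y_0 by simp
  qed
  define c where "c t = k (y t) (u t) + \<eta> (f (y t) (u t)) - \<eta> (y t)" for t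
  have dV: "ereal (V y0) \<le> dstar Y U f k y0" by (rule S.V_le_dstar[OF y0])
  have cge: "c t \<ge> V y0" for t
  proof -
    have "ereal (V y0) \<le> ereal (k (y t) (u t) + \<psi> y0 - \<psi> (y t) + \<eta> (f (y t) (u t)) - \<eta> (y t))"
      using dV DOt[of t] by (meson order_trans)
    then show ?thesis unfolding c_def using psi_const[of t] by simp
  qed
  define P where "P = (\<Sum>t<T0. k (y t) (u t)) / real T0"
  have lim: "(\<lambda>T. (1 / real T) * (\<Sum>t<T. k (y t) (u t))) \<longlonglongrightarrow> P"
    unfolding P_def by (rule periodic_avg[OF T0]) (use per in simp)
  have "liminf (\<lambda>T. ereal ((1 / real T) * (\<Sum>t<T. k (y t) (u t)))) = ereal P"
    by (rule lim_imp_Liminf[OF _ tendsto_ereal[OF lim]]) simp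
  then have PINF: "ereal P = (INF u' \<in> Uinf Y U f y0. avg_cost f k y0 u')" using opt by simp
  have PV: "P \<le> V y0"
  proof (rule field_le_epsilon)
    fix e :: real assume e: "e > 0"
    obtain u' where u': "u' \<in> Uinf Y U f y0" "avg_cost f k y0 u' \<le> ereal (V y0 + 2 * (e / 2))"
      using S.good_control[of "e/2" y0] e y0 by auto
    have "ereal P \<le> avg_cost f k y0 u'" unfolding PINF using u'(1) by (rule INF_lower)
    also have "\<dots> \<le> ereal (V y0 + e)" using u'(2) by simp
    finally show "P \<le> V y0 + e" by simp
  qed
  have csum: "(\<Sum>t<T0. c t) = (\<Sum>t<T0. k (y t) (u t))"
  proof -
    have "(\<Sum>t<T0. c t) = (\<Sum>t<T0. k (y t) (u t)) + (\<Sum>t<T0. \<eta> (y (Suc t)) - \<eta> (y t))"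
    proof -
      have "(\<Sum>t<T0. c t) = (\<Sum>t<T0. k (y t) (u t) + (\<eta> (y (Suc t)) - \<eta> (y t)))"
        unfolding c_def using dyn by (intro sum.cong refl) simp
      also have "\<dots> = (\<Sum>t<T0. k (y t) (u t)) + (\<Sum>t<T0. \<eta> (y (Suc t)) - \<eta> (y t))"
        by (rule sum.distrib)
      finally show ?thesis .
    qed
    also have "(\<Sum>t<T0. \<eta> (y (Suc t)) - \<eta> (y t)) = \<eta> (y T0) - \<eta> (y 0)" by (rule sum_lessThan_telescope)
    also have "y T0 = y 0" using per[rule_format, of 0] by simp
    finally show ?thesis by simp
  qed
  have "(\<Sum>t<T0. c t - V y0) = (\<Sum>t<T0. k (y t) (u t)) - real T0 * V y0"
    using csum by (simp add: sum_subtractf)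
  also have "(\<Sum>t<T0. k (y t) (u t)) = real T0 * P" unfolding P_def using T0 by simp
  finally have seq: "(\<Sum>t<T0. c t - V y0) = real T0 * P - real T0 * V y0" .
  have "real T0 * P \<le> real T0 * V y0" using PV by (intro mult_left_mono) auto
  then have "(\<Sum>t<T0. c t - V y0) \<le> 0" using seq by linarith
  moreover have "(\<Sum>t<T0. c t - V y0) \<ge> 0" using cge by (intro sum_nonneg) simp
  ultimately have "(\<Sum>t<T0. c t - V y0) = 0" by simp
  then have "\<forall>t\<in>{..<T0}. c t - V y0 = 0" using cge by (subst sum_nonneg_eq_0_iff[symmetric]) auto
  then have cmod: "c t = V y0" if "t < T0" for t using that by simp
  have ceq: "c t = V y0" for t
  proof -
    have "c t = c (t mod T0)" unfolding c_def using pmod[of t] by simp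
    also have "\<dots> = V y0" using cmod T0 by simp
    finally show ?thesis .
  qed
  show ?thesis
  proof (intro allI conjI)
    fix t
    show "\<psi> (y t) = \<psi> y0" by (rule psi_const)
    show "k (y t) (u t) - \<psi> (y t) + \<eta> (f (y t) (u t)) - \<eta> (y t) = V y0 - \<psi> y0"
      using ceq[of t] psi_const[of t] unfolding c_def by simp
  qed
qed

end
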